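(* Every (non-degenerate) parallelogram $\Omega\subset\mathbb{R}^2$ satisfies $P(\Omega)\,w(\Omega)\le 4|\Omega|$. Consequently every parallelogram satisfies $P(\Omega)^2\mu_1(\Omega)\le16\pi^2$.
   Context: $P(\Omega)$ is the perimeter, $|\Omega|$ the area, $w(\Omega)=\min_{\nu\in\mathbb S^1}\mathcal H^1(p_\nu(\Omega))$ the minimal width ($p_\nu$ the orthogonal projection onto $\mathbb{R}\nu$), and $\mu_1(\Omega)=\min_{u\in H^1(\Omega),\int_\Omega u=0}\int_\Omega|\nabla u|^2/\int_\Omega u^2$ the first non-trivial Neumann eigenvalue of the Laplacian. *)

theory Defs
  imports "HOL-Analysis.Analysis"
begin

definition is_parallelogram :: "(real^2) set \<Rightarrow> bool" where
  "is_parallelogram \<Omega> \<longleftrightarrow>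
     (\<exists>p a b. a$1 * b$2 - a$2 * b$1 \<noteq> 0 \<and>
        \<Omega> = {p + s *\<^sub>R a + t *\<^sub>R b | s t. 0 < s \<and> s < 1 \<and> 0 < t \<and> t < 1})"

definition area :: "(real^2) set \<Rightarrow> real" where
  "area \<Omega> = measure lebesgue \<Omega>"

definition min_width :: "(real^2) set \<Rightarrow> real" where
  "min_width \<Omega> = (INF \<nu>\<in>{\<nu>::real^2. norm \<nu> = 1}. measure lebesgue {x \<bullet> \<nu> | x. x \<in> \<Omega>})"

definition C1c_on :: "(real^2) set \<Rightarrow> (real^2 \<Rightarrow> 'b::real_normed_vector)
     \<Rightarrow> (real^2 \<Rightarrow> real^2 \<Rightarrow> 'b) \<Rightarrow> bool" where
  "C1c_on U f D \<longleftrightarrow>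
     (\<forall>x. (f has_derivative D x) (at x)) \<and>
     (\<forall>v. continuous_on UNIV (\<lambda>x. D x v)) \<and>
     (\<exists>K. compact K \<and> K \<subseteq> U \<and> (\<forall>x. x \<notin> K \<longrightarrow> f x = 0))"

text \<open>De Giorgi perimeter: total variation of the indicator function of \<Omega>.\<close>
definition perimeter :: "(real^2) set \<Rightarrow> real" where
  "perimeter \<Omega> = Sup {(LINT x:\<Omega>|lebesgue. (\<Sum>b\<in>Basis. D x b \<bullet> b)) | \<phi> D.
      C1c_on UNIV \<phi> D \<and> (\<forall>x. norm (\<phi> x) \<le> 1)}"

definition weak_gradient_H1 :: "(real^2) set \<Rightarrow> (real^2 \<Rightarrow> real) \<Rightarrow> (real^2 \<Rightarrow> real^2) \<Rightarrow> bool" where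
  "weak_gradient_H1 \<Omega> u g \<longleftrightarrow>
     set_borel_measurable lebesgue \<Omega> u \<and>
     set_integrable lebesgue \<Omega> (\<lambda>x. (u x)\<^sup>2) \<and>
     set_borel_measurable lebesgue \<Omega> g \<and>
     set_integrable lebesgue \<Omega> (\<lambda>x. (norm (g x))\<^sup>2) \<and>
     (\<forall>\<phi> D. C1c_on \<Omega> \<phi> D \<longrightarrow>
        (\<forall>b\<in>Basis. (LINT x:\<Omega>|lebesgue. u x * D x b) = - (LINT x:\<Omega>|lebesgue. (g x \<bullet> b) * \<phi> x)))"

definition H1 :: "(real^2) set \<Rightarrow> (real^2 \<Rightarrow> real) set" where
  "H1 \<Omega> = {u. \<exists>g. weak_gradient_H1 \<Omega> u g}"

text \<open>First non-trivial Neumann eigenvalue via the Rayleigh quotient.\<close>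
definition mu1 :: "(real^2) set \<Rightarrow> real" where
  "mu1 \<Omega> = Inf {(LINT x:\<Omega>|lebesgue. (norm (g x))\<^sup>2) / (LINT x:\<Omega>|lebesgue. (u x)\<^sup>2) | u g.
      weak_gradient_H1 \<Omega> u g \<and> (LINT x:\<Omega>|lebesgue. u x) = 0 \<and>
      (LINT x:\<Omega>|lebesgue. (u x)\<^sup>2) \<noteq> 0}"

end

theory Submission
  imports Defs
begin

lemma vec2_eta: "vector [x$1, x$2] = (x::real^2)"
  by (simp add: vec_eq_iff forall_2)

lemma vector2_axis: "vector [s,t] = s *\<^sub>R axis 1 1 + t *\<^sub>R (axis 2 1 :: real^2)"
  by (simp add: vec_eq_iff forall_2 axis_def)

lemma cbox_cart2: "cbox (vector [u1,u2]) (vector [v1,v2]) = {x::real^2. u1 \<le> x$1 \<and> x$1 \<le> v1 \<and> u2 \<le> x$2 \<and> x$2 \<le> v2}"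
  by (auto simp: mem_box_cart forall_2)

lemma content_cart2: "Henstock_Kurzweil_Integration.content (cbox (vector [u1,u2]) (vector [v1,v2]) :: (real^2) set) =
   (if u1 \<le> v1 \<and> u2 \<le> v2 then (v1-u1)*(v2-u2) else 0)"
proof (cases "u1 \<le> v1 \<and> u2 \<le> v2")
  case True
  then have "cbox (vector [u1,u2]) (vector [v1,v2]) \<noteq> ({} :: (real^2) set)"
    by (auto simp: interval_ne_empty_cart forall_2)
  then show ?thesis using True by (simp add: content_cbox_cart UNIV_2)
next
  case False
  then have E: "cbox (vector [u1,u2]) (vector [v1,v2]) = ({} :: (real^2) set)"
    by (auto simp: interval_ne_empty_cart forall_2 cbox_cart2)
  show ?thesis unfolding if_not_P[OF False] E by simp
qed

lemma fubini2:
  fixes G :: "real^2 \<Rightarrow> real"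
  assumes "continuous_on (cbox 0 1) G"
  shows "integral (cbox 0 1) G = integral {0..1} (\<lambda>s. integral {0..1} (\<lambda>t. G (vector [s,t])))"
proof -
  define g :: "real\<times>real \<Rightarrow> real^2" where "g = (\<lambda>(s,t). vector [s,t])"
  define h :: "real^2 \<Rightarrow> real\<times>real" where "h = (\<lambda>x. (x$1, x$2))"
  have hg: "h (g x) = x" for x by (cases x) (simp add: g_def h_def)
  have gh: "g (h x) = x" for x by (simp add: g_def h_def vec2_eta)
  have gcb: "g ` cbox (u1,u2) (v1,v2) = cbox (vector [u1,u2]) (vector [v1,v2])" for u1 u2 v1 v2
  proof -
    have "g ` cbox (u1,u2) (v1,v2) = g ` ({u1..v1} \<times> {u2..v2})"
      by (simp add: cbox_Pair_eq)
    also have "\<dots> = cbox (vector [u1,u2]) (vector [v1,v2])"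
    proof safe
      fix x :: "real^2" assume "x \<in> cbox (vector [u1,u2]) (vector [v1,v2])"
      then show "x \<in> g ` ({u1..v1} \<times> {u2..v2})"
        by (intro image_eqI[where x="h x"]) (auto simp: g_def vec2_eta h_def cbox_cart2)
    qed (auto simp: g_def cbox_cart2)
    finally show ?thesis .
  qed
  have hcb: "h ` cbox w z = cbox (w$1,w$2) (z$1,z$2)" for w z :: "real^2"
  proof -
    have "h ` cbox w z = h ` (g ` cbox (w$1,w$2) (z$1,z$2))"
      using gcb[of "w$1" "w$2" "z$1" "z$2"] by (simp add: vec2_eta)
    also have "\<dots> = cbox (w$1,w$2) (z$1,z$2)" by (simp add: image_image hg)
    finally show ?thesis .
  qed
  have contg: "continuous (at x) g" for x
  proof -
    have "g = (\<lambda>x. fst x *\<^sub>R axis 1 1 + snd x *\<^sub>R axis 2 1)"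
      by (auto simp: g_def vector2_axis)
    then show ?thesis by (auto intro!: continuous_intros)
  qed
  have G_int: "(G has_integral integral (cbox 0 1) G) (cbox 0 1)"
    using assms integrable_continuous by blast
  have "((\<lambda>x. G (g x)) has_integral (1/1) *\<^sub>R integral (cbox 0 1) G) (h ` cbox 0 1)"
  proof (rule has_integral_twiddle[OF _ hg gh contg _ _ _ G_int])
    show "\<exists>w z. g ` cbox u v = cbox w z" for u v
      by (cases u; cases v) (use gcb in blast)
    show "\<exists>w z. h ` cbox u v = cbox w z" for u v
      using hcb by blast
    show "Henstock_Kurzweil_Integration.content (g ` cbox u v) = 1 * Henstock_Kurzweil_Integration.content (cbox u v)" for u v
      by (cases u; cases v) (auto simp: gcb content_cart2 content_Pair)
  qed simp
  moreover have "h ` cbox 0 1 = cbox (0,0) (1,1)" by (simp add: hcb)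
  ultimately have "integral (cbox (0,0) (1::real,1::real)) (\<lambda>x. G (g x)) = integral (cbox 0 1) G"
    by (simp add: integral_unique)
  moreover have "continuous_on (cbox (0,0) (1::real,1::real)) (\<lambda>x. G (g x))"
  proof -
    have v: "vector [0,0] = (0::real^2)" "vector [1,1] = (1::real^2)"
      by (simp_all add: vec_eq_iff forall_2)
    have "g ` cbox (0,0) (1,1) = cbox 0 1" using gcb[of 0 0 1 1] by (simp add: v)
    then show ?thesis
      by (intro continuous_on_compose2[OF assms]) (auto intro!: continuous_at_imp_continuous_on contg)
  qed
  ultimately show ?thesis
    using integral_prod_continuous[of 0 0 1 1 "\<lambda>x. G (g x)"] by (simp add: g_def)
qed

definition Lm :: "real^2 \<Rightarrow> real^2 \<Rightarrow> real^2 \<Rightarrow> real^2" where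
  "Lm a b x = x$1 *\<^sub>R a + x$2 *\<^sub>R b"

lemma linear_Lm: "linear (Lm a b)"
  unfolding Lm_def by (intro linearI) (auto simp: algebra_simps)

lemma det_Lm: "det (matrix (Lm a b)) = a$1*b$2 - a$2*b$1"
  by (simp add: det_2 matrix_def Lm_def axis_def)

definition PG :: "real^2 \<Rightarrow> real^2 \<Rightarrow> real^2 \<Rightarrow> (real^2) set" where
  "PG p a b = {p + s *\<^sub>R a + t *\<^sub>R b | s t. 0 < s \<and> s < 1 \<and> 0 < t \<and> t < 1}"

lemma PG_image: "PG p a b = (\<lambda>x. p + Lm a b x) ` box 0 1"
  unfolding PG_def
proof safe
  fix s t :: real assume "0<s" "s<1" "0<t" "t<1"
  then show "p + s *\<^sub>R a + t *\<^sub>R b \<in> (\<lambda>x. p + Lm a b x) ` box 0 1"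
    by (intro image_eqI[where x="vector [s,t]"]) (auto simp: Lm_def mem_box_cart forall_2 add.assoc)
next
  fix x :: "real^2" assume "x \<in> box 0 1"
  then show "\<exists>s t. p + Lm a b x = p + s *\<^sub>R a + t *\<^sub>R b \<and> 0 < s \<and> s < 1 \<and> 0 < t \<and> t < 1"
    by (auto simp: Lm_def mem_box_cart forall_2 add.assoc)
qed

lemma CI:
  fixes f :: "real^2 \<Rightarrow> real"
  assumes d: "a$1*b$2 - a$2*b$1 \<noteq> 0" and f: "continuous_on UNIV f"
  shows "set_integrable lebesgue (PG p a b) f"
    "(LINT x:PG p a b|lebesgue. f x) = \<bar>a$1*b$2 - a$2*b$1\<bar> *
        integral {0..1} (\<lambda>s. integral {0..1} (\<lambda>t. f (p + s *\<^sub>R a + t *\<^sub>R b)))"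
proof -
  define g where "g = (\<lambda>x. p + Lm a b x)"
  define F :: "real^2 \<Rightarrow> real^1" where "F = (\<lambda>x. vec (f x))"
  define S :: "(real^2) set" where "S = box 0 1"
  define dd where "dd = \<bar>a$1*b$2 - a$2*b$1\<bar>"
  have gd: "(g has_derivative Lm a b) (at x within S)" for x
    unfolding g_def
    by (rule has_derivative_eq_rhs, rule has_derivative_add[OF has_derivative_const linear_imp_has_derivative[OF linear_Lm]]) auto
  have inj: "inj_on g S"
  proof -
    have "inj (Lm a b)" using det_nz_iff_inj[OF linear_Lm] d det_Lm by metis
    then show ?thesis unfolding g_def by (auto simp: inj_on_def dest: injD)
  qed
  have Sl: "S \<in> sets lebesgue" unfolding S_def by simp
  have contg: "continuous_on UNIV g" unfolding g_def Lm_def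
    by (auto intro!: continuous_intros)
  have contfg: "continuous_on UNIV (\<lambda>x. f (g x))"
    by (rule continuous_on_compose2[OF f contg]) auto
  have ai_cbox: "(\<lambda>x. dd *\<^sub>R F (g x)) absolutely_integrable_on cbox 0 1"
    unfolding F_def
    by (rule absolutely_integrable_continuous) (auto intro!: continuous_intros continuous_on_subset[OF contfg] simp: vec_def)
  have ai: "(\<lambda>x. dd *\<^sub>R F (g x)) absolutely_integrable_on S"
    by (rule set_integrable_subset[OF ai_cbox]) (auto simp: S_def box_subset_cbox)
  have main: "F absolutely_integrable_on (g ` S) \<and> integral (g ` S) F = integral S (\<lambda>x. dd *\<^sub>R F (g x))"
    using has_absolute_integral_change_of_variables[OF Sl gd inj, of F "integral S (\<lambda>x. dd *\<^sub>R F (g x))"] ai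
    unfolding det_Lm dd_def by blast
  have gS: "g ` S = PG p a b" unfolding g_def S_def PG_image ..
  have Fi: "F absolutely_integrable_on PG p a b" using main gS by simp
  have fi: "f absolutely_integrable_on PG p a b"
    using absolutely_integrable_linear[OF Fi bounded_linear_vec_nth[of 1]]
    by (simp add: o_def F_def)
  then show "set_integrable lebesgue (PG p a b) f" .
  have "(LINT x:PG p a b|lebesgue. f x) = integral (PG p a b) f"
    using set_lebesgue_integral_eq_integral(2)[OF fi] .
  also have "\<dots> = integral (PG p a b) (\<lambda>x. F x $ 1)" by (simp add: F_def)
  also have "\<dots> = integral (PG p a b) F $ 1"
    using Fi integral_component_eq_cart set_lebesgue_integral_eq_integral(1) by blast
  also have "\<dots> = integral S (\<lambda>x. dd *\<^sub>R F (g x)) $ 1" using main gS by simp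
  also have "\<dots> = integral S (\<lambda>x. (dd *\<^sub>R F (g x)) $ 1)"
    using ai integral_component_eq_cart set_lebesgue_integral_eq_integral(1) by (metis (no_types))
  also have "\<dots> = integral S (\<lambda>x. dd * f (g x))" by (simp add: F_def)
  also have "\<dots> = dd * integral S (\<lambda>x. f (g x))" by simp
  also have "integral S (\<lambda>x. f (g x)) = integral (cbox 0 1) (\<lambda>x. f (g x))"
    unfolding S_def by (rule integral_open_interval)
  also have "\<dots> = integral {0..1} (\<lambda>s. integral {0..1} (\<lambda>t. f (g (vector [s,t]))))"
    by (rule fubini2) (rule continuous_on_subset[OF contfg], simp)
  also have "(\<lambda>s. integral {0..1} (\<lambda>t. f (g (vector [s,t])))) = (\<lambda>s. integral {0..1} (\<lambda>t. f (p + s *\<^sub>R a + t *\<^sub>R b)))"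
    by (simp add: g_def Lm_def add.assoc)
  finally show "(LINT x:PG p a b|lebesgue. f x) = \<bar>a$1*b$2 - a$2*b$1\<bar> *
        integral {0..1} (\<lambda>s. integral {0..1} (\<lambda>t. f (p + s *\<^sub>R a + t *\<^sub>R b)))"
    by (simp add: dd_def)
qed

lemma FTC_line:
  fixes F :: "real^2 \<Rightarrow> real"
  assumes "\<And>x. (F has_derivative DF x) (at x)"
  shows "((\<lambda>t. DF (q + t *\<^sub>R v) v) has_integral (F (q + v) - F q)) {0..1}"
proof -
  have "((\<lambda>t. DF (q + t *\<^sub>R v) v) has_integral (F (q + 1 *\<^sub>R v) - F (q + 0 *\<^sub>R v))) {0..1}"
  proof (rule fundamental_theorem_of_calculus)
    fix t :: real
    have l: "((\<lambda>t. q + t *\<^sub>R v) has_derivative (\<lambda>h. h *\<^sub>R v)) (at t within {0..1})"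
      by (auto intro!: derivative_eq_intros)
    have "((\<lambda>t. F (q + t *\<^sub>R v)) has_derivative (\<lambda>h. DF (q + t *\<^sub>R v) (h *\<^sub>R v))) (at t within {0..1})"
      by (rule has_derivative_compose[OF l assms])
    moreover have "DF (q + t *\<^sub>R v) (h *\<^sub>R v) = h *\<^sub>R DF (q + t *\<^sub>R v) v" for h
      using has_derivative_linear[OF assms] linear_scale by blast
    ultimately show "((\<lambda>t. F (q + t *\<^sub>R v)) has_vector_derivative DF (q + t *\<^sub>R v) v) (at t within {0..1})"
      unfolding has_vector_derivative_def by simp
  qed simp
  then show ?thesis by simp
qed

lemma DIV:
  fixes F :: "real^2 \<Rightarrow> real"
  assumes d: "a$1*b$2 - a$2*b$1 \<noteq> 0"
    and der: "\<And>x. (F has_derivative DF x) (at x)"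
    and cont: "\<And>v. continuous_on UNIV (\<lambda>x. DF x v)"
  shows "(LINT x:PG p a b|lebesgue. DF x b) = \<bar>a$1*b$2 - a$2*b$1\<bar> * integral {0..1} (\<lambda>s. F (p + s *\<^sub>R a + b) - F (p + s *\<^sub>R a))"
    "(LINT x:PG p a b|lebesgue. DF x a) = \<bar>a$1*b$2 - a$2*b$1\<bar> * integral {0..1} (\<lambda>t. F (p + a + t *\<^sub>R b) - F (p + t *\<^sub>R b))"
proof -
  have ctu: "continuous_on UNIV (\<lambda>(s,t). DF (p + s *\<^sub>R a + t *\<^sub>R b) v)" for v
  proof -
    have "continuous_on UNIV (\<lambda>z::real\<times>real. p + fst z *\<^sub>R a + snd z *\<^sub>R b)"
      by (auto intro!: continuous_intros)
    from continuous_on_compose2[OF cont this] show ?thesis by (simp add: case_prod_beta')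
  qed
  show "(LINT x:PG p a b|lebesgue. DF x b) = \<bar>a$1*b$2 - a$2*b$1\<bar> * integral {0..1} (\<lambda>s. F (p + s *\<^sub>R a + b) - F (p + s *\<^sub>R a))"
    unfolding CI(2)[OF d cont]
  proof -
    have "integral {0..1} (\<lambda>t. DF (p + s *\<^sub>R a + t *\<^sub>R b) b) = F (p + s *\<^sub>R a + b) - F (p + s *\<^sub>R a)" for s
      using FTC_line[OF der, of "p + s *\<^sub>R a" b] by (simp add: integral_unique)
    then show "\<bar>a$1*b$2 - a$2*b$1\<bar> * integral {0..1} (\<lambda>s. integral {0..1} (\<lambda>t. DF (p + s *\<^sub>R a + t *\<^sub>R b) b)) =
      \<bar>a$1*b$2 - a$2*b$1\<bar> * integral {0..1} (\<lambda>s. F (p + s *\<^sub>R a + b) - F (p + s *\<^sub>R a))"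
      by simp
  qed
  show "(LINT x:PG p a b|lebesgue. DF x a) = \<bar>a$1*b$2 - a$2*b$1\<bar> * integral {0..1} (\<lambda>t. F (p + a + t *\<^sub>R b) - F (p + t *\<^sub>R b))"
    unfolding CI(2)[OF d cont]
  proof -
    have sw: "integral (cbox 0 1) (\<lambda>s. integral (cbox 0 1) (\<lambda>t. DF (p + s *\<^sub>R a + t *\<^sub>R b) a)) =
          integral (cbox 0 1) (\<lambda>t. integral (cbox 0 1) (\<lambda>s. DF (p + s *\<^sub>R a + t *\<^sub>R b) a))"
      by (rule integral_swap_continuous) (rule continuous_on_subset[OF ctu], simp)
    have "integral {0..1} (\<lambda>s. DF (p + s *\<^sub>R a + t *\<^sub>R b) a) = F (p + a + t *\<^sub>R b) - F (p + t *\<^sub>R b)" for t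
    proof -
      have e: "p + s *\<^sub>R a + t *\<^sub>R b = (p + t *\<^sub>R b) + s *\<^sub>R a" for s by (simp add: algebra_simps)
      show ?thesis using FTC_line[OF der, of "p + t *\<^sub>R b" a] by (simp add: e integral_unique algebra_simps)
    qed
    then show "\<bar>a$1*b$2 - a$2*b$1\<bar> * integral {0..1} (\<lambda>s. integral {0..1} (\<lambda>t. DF (p + s *\<^sub>R a + t *\<^sub>R b) a)) =
      \<bar>a$1*b$2 - a$2*b$1\<bar> * integral {0..1} (\<lambda>t. F (p + a + t *\<^sub>R b) - F (p + t *\<^sub>R b))"
      using sw by simp
  qed
qed

lemma Basis_2: "(Basis :: (real^2) set) = {axis 1 1, axis 2 1}"
  by (auto simp: Basis_vec_def UNIV_2)

lemma sum_Basis_2: "(\<Sum>e\<in>(Basis :: (real^2) set). f e) = f (axis 1 1) + f (axis 2 1)"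
  by (simp add: Basis_2 axis_eq_axis)

lemma norm_2: "norm (x::real^2) = sqrt (x$1^2 + x$2^2)"
  by (simp add: norm_eq_sqrt_inner inner_vec_def UNIV_2 power2_eq_square)

lemma norm_2_sq: "(norm (x::real^2))\<^sup>2 = x$1^2 + x$2^2"
  by (simp add: norm_2)

lemma cs_2: fixes x1 x2 y1 y2 :: real shows "\<bar>x1*y1 + x2*y2\<bar> \<le> sqrt (x1^2+x2^2) * sqrt (y1^2+y2^2)"
proof -
  have "(x1*y1 + x2*y2)^2 \<le> (x1^2+x2^2) * (y1^2+y2^2)"
  proof -
    have "0 \<le> (x1*y2 - x2*y1)^2" by simp
    then show ?thesis by (simp add: power2_eq_square algebra_simps)
  qed
  then have "sqrt ((x1*y1 + x2*y2)^2) \<le> sqrt ((x1^2+x2^2) * (y1^2+y2^2))"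
    using real_sqrt_le_mono by blast
  then show ?thesis by (simp add: real_sqrt_mult)
qed

lemma integral01_abs_bound:
  fixes h :: "real \<Rightarrow> real"
  assumes "continuous_on {0..1} h" "\<And>t. t \<in> {0..1} \<Longrightarrow> \<bar>h t\<bar> \<le> B"
  shows "\<bar>integral {0..1} h\<bar> \<le> B"
proof -
  have hi: "h integrable_on {0..1}" using assms(1) integrable_continuous_real by blast
  have "integral {0..1} h \<le> B"
    using integral_le[OF hi, of "\<lambda>_. B"] assms(2) by (auto simp: abs_le_iff)
  moreover have "-B \<le> integral {0..1} h"
  proof -
    have "\<And>x. x\<in>{0..1} \<Longrightarrow> -B \<le> h x" using assms(2) by (force simp: abs_le_iff)
    then show ?thesis using integral_le[OF _ hi, of "\<lambda>_. -B"] by auto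
  qed
  ultimately show ?thesis by (simp add: abs_le_iff)
qed

lemma perimeter_elem_bound:
  fixes \<phi> :: "real^2 \<Rightarrow> real^2"
  assumes d: "a$1*b$2 - a$2*b$1 \<noteq> 0"
    and C: "C1c_on UNIV \<phi> D" and bnd: "\<And>x. norm (\<phi> x) \<le> 1"
  shows "(LINT x:PG p a b|lebesgue. (\<Sum>e\<in>Basis. D x e \<bullet> e)) \<le> 2 * (norm a + norm b)"
proof -
  define dt where "dt = a$1*b$2 - a$2*b$1"
  have der: "\<And>x. (\<phi> has_derivative D x) (at x)" and cD: "\<And>v. continuous_on UNIV (\<lambda>x. D x v)"
    using C unfolding C1c_on_def by auto
  have contphi: "continuous_on UNIV \<phi>"
    using der by (meson continuous_at_imp_continuous_on has_derivative_continuous)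
  define F1 where "F1 = (\<lambda>x. b$2 * \<phi> x $ 1 - b$1 * \<phi> x $ 2)"
  define DF1 where "DF1 = (\<lambda>x v. b$2 * D x v $ 1 - b$1 * D x v $ 2)"
  define F2 where "F2 = (\<lambda>x. a$1 * \<phi> x $ 2 - a$2 * \<phi> x $ 1)"
  define DF2 where "DF2 = (\<lambda>x v. a$1 * D x v $ 2 - a$2 * D x v $ 1)"
  have nth_der: "((\<lambda>x. \<phi> x $ i) has_derivative (\<lambda>v. D x v $ i)) (at x)" for x i
    using bounded_linear.has_derivative[OF bounded_linear_vec_nth der] .
  have der1: "(F1 has_derivative DF1 x) (at x)" for x
    unfolding F1_def DF1_def by (auto intro!: derivative_eq_intros nth_der)
  have der2: "(F2 has_derivative DF2 x) (at x)" for x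
    unfolding F2_def DF2_def by (auto intro!: derivative_eq_intros nth_der)
  have cnth: "continuous_on UNIV (\<lambda>x. D x v $ i)" for v i
    using continuous_on_component[OF cD] by blast
  have c1: "continuous_on UNIV (\<lambda>x. DF1 x v)" for v
    unfolding DF1_def by (auto intro!: continuous_intros cnth)
  have c2: "continuous_on UNIV (\<lambda>x. DF2 x v)" for v
    unfolding DF2_def by (auto intro!: continuous_intros cnth)
  have lin: "linear (D x)" for x using has_derivative_linear[OF der] .
  have hd: "dt \<noteq> 0" using d by (simp add: dt_def)
  have e1: "axis 1 1 = (1/dt) *\<^sub>R (b$2 *\<^sub>R a - a$2 *\<^sub>R b)"
  proof -
    have "b$2 * a$1 - a$2 * b$1 = dt" "b$2 * a$2 - a$2 * b$2 = 0" by (simp_all add: dt_def)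
    then show ?thesis using hd by (simp add: vec_eq_iff forall_2 axis_def)
  qed
  have e2: "axis 2 1 = (1/dt) *\<^sub>R (a$1 *\<^sub>R b - b$1 *\<^sub>R a)"
  proof -
    have "a$1 * b$2 - b$1 * a$2 = dt" "a$1 * b$1 - b$1 * a$1 = 0" by (simp_all add: dt_def)
    then show ?thesis using hd by (simp add: vec_eq_iff forall_2 axis_def)
  qed
  have div: "(\<Sum>e\<in>Basis. D x e \<bullet> e) = (1/dt) * (DF1 x a + DF2 x b)" for x
  proof -
    have "(\<Sum>e\<in>Basis. D x e \<bullet> e) = D x (axis 1 1) $ 1 + D x (axis 2 1) $ 2"
      by (simp add: sum_Basis_2 inner_axis)
    also have "\<dots> = (1/dt) * (DF1 x a + DF2 x b)"
    proof -
      have "D x (axis 1 1) = (1/dt) *\<^sub>R (b$2 *\<^sub>R D x a - a$2 *\<^sub>R D x b)"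
        by (simp only: e1 linear_scale[OF lin] linear_diff[OF lin])
      moreover have "D x (axis 2 1) = (1/dt) *\<^sub>R (a$1 *\<^sub>R D x b - b$1 *\<^sub>R D x a)"
        by (simp only: e2 linear_scale[OF lin] linear_diff[OF lin])
      ultimately have h1: "D x (axis 1 1) $ 1 = (1/dt) * (b$2 * D x a $ 1 - a$2 * D x b $ 1)"
        and h2: "D x (axis 2 1) $ 2 = (1/dt) * (a$1 * D x b $ 2 - b$1 * D x a $ 2)"
        by simp_all
      show ?thesis unfolding h1 h2 DF1_def DF2_def by (simp add: algebra_simps)
    qed
    finally show ?thesis .
  qed
  have i1: "set_integrable lebesgue (PG p a b) (\<lambda>x. DF1 x a)" using CI(1)[OF d c1] .
  have i2: "set_integrable lebesgue (PG p a b) (\<lambda>x. DF2 x b)" using CI(1)[OF d c2] .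
  define I1 where "I1 = integral {0..1} (\<lambda>t. F1 (p + a + t *\<^sub>R b) - F1 (p + t *\<^sub>R b))"
  define I2 where "I2 = integral {0..1} (\<lambda>s. F2 (p + s *\<^sub>R a + b) - F2 (p + s *\<^sub>R a))"
  have "(LINT x:PG p a b|lebesgue. (\<Sum>e\<in>Basis. D x e \<bullet> e)) = (1/dt) * ((LINT x:PG p a b|lebesgue. DF1 x a) + (LINT x:PG p a b|lebesgue. DF2 x b))"
    unfolding div by (simp add: set_integral_add(2)[OF i1 i2])
  also have "\<dots> = (\<bar>dt\<bar>/dt) * (I1 + I2)"
    unfolding DIV(2)[OF d der1 c1] DIV(1)[OF d der2 c2] I1_def I2_def dt_def by (simp add: algebra_simps)
  also have "\<dots> \<le> \<bar>I1\<bar> + \<bar>I2\<bar>"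
  proof -
    have "(\<bar>dt\<bar>/dt) * (I1 + I2) \<le> \<bar>(\<bar>dt\<bar>/dt) * (I1 + I2)\<bar>" by (rule abs_ge_self)
    also have "\<dots> = \<bar>I1 + I2\<bar>" using d by (simp add: dt_def abs_mult)
    finally show ?thesis by linarith
  qed
  also have "\<dots> \<le> 2 * norm b + 2 * norm a"
  proof (rule add_mono)
    have F1b: "\<bar>F1 y\<bar> \<le> norm b" for y
    proof -
      have "\<bar>F1 y\<bar> \<le> sqrt ((b$2)^2 + (-b$1)^2) * sqrt ((\<phi> y $ 1)^2 + (\<phi> y $ 2)^2)"
        using cs_2[of "b$2" "\<phi> y $ 1" "-b$1" "\<phi> y $ 2"] by (simp add: F1_def)
      also have "\<dots> \<le> norm b * 1"
        using bnd[of y] by (intro mult_mono) (auto simp: norm_2 add.commute)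
      finally show ?thesis by simp
    qed
    have F2b: "\<bar>F2 y\<bar> \<le> norm a" for y
    proof -
      have "\<bar>F2 y\<bar> \<le> sqrt ((a$1)^2 + (-a$2)^2) * sqrt ((\<phi> y $ 2)^2 + (\<phi> y $ 1)^2)"
        using cs_2[of "a$1" "\<phi> y $ 2" "-a$2" "\<phi> y $ 1"] by (simp add: F2_def)
      also have "\<dots> \<le> norm a * 1"
        using bnd[of y] by (intro mult_mono) (auto simp: norm_2 add.commute)
      finally show ?thesis by simp
    qed
    have cF1: "continuous_on UNIV F1" and cF2: "continuous_on UNIV F2"
      unfolding F1_def F2_def by (auto intro!: continuous_intros continuous_on_component contphi)
    show "\<bar>I1\<bar> \<le> 2 * norm b" unfolding I1_def
    proof (rule integral01_abs_bound)
      show "continuous_on {0..1} (\<lambda>t. F1 (p + a + t *\<^sub>R b) - F1 (p + t *\<^sub>R b))"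
        by (intro continuous_intros continuous_on_compose2[OF cF1]) auto
      show "\<bar>F1 (p + a + t *\<^sub>R b) - F1 (p + t *\<^sub>R b)\<bar> \<le> 2 * norm b" for t
        using F1b[of "p + a + t *\<^sub>R b"] F1b[of "p + t *\<^sub>R b"] by linarith
    qed
    show "\<bar>I2\<bar> \<le> 2 * norm a" unfolding I2_def
    proof (rule integral01_abs_bound)
      show "continuous_on {0..1} (\<lambda>s. F2 (p + s *\<^sub>R a + b) - F2 (p + s *\<^sub>R a))"
        by (intro continuous_intros continuous_on_compose2[OF cF2]) auto
      show "\<bar>F2 (p + s *\<^sub>R a + b) - F2 (p + s *\<^sub>R a)\<bar> \<le> 2 * norm a" for s
        using F2b[of "p + s *\<^sub>R a + b"] F2b[of "p + s *\<^sub>R a"] by linarith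
    qed
  qed
  finally show ?thesis by simp
qed

lemma inner_2: "(x::real^2) \<bullet> y = x$1*y$1 + x$2*y$2"
  by (simp add: inner_vec_def UNIV_2)

lemma C1c_zero: "C1c_on UNIV (\<lambda>_. 0::real^2) (\<lambda>x v. 0)"
  unfolding C1c_on_def by (auto intro!: exI[of _ "{}"])

lemma perimeter_bounds:
  assumes d: "a$1*b$2 - a$2*b$1 \<noteq> 0"
  shows "perimeter (PG p a b) \<le> 2 * (norm a + norm b)" "0 \<le> perimeter (PG p a b)"
proof -
  define S where "S = {(LINT x:PG p a b|lebesgue. (\<Sum>b\<in>Basis. D x b \<bullet> b)) | (\<phi>::real^2\<Rightarrow>real^2) D.
      C1c_on UNIV \<phi> D \<and> (\<forall>x. norm (\<phi> x) \<le> 1)}"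
  have P: "perimeter (PG p a b) = Sup S" unfolding perimeter_def S_def ..
  have 0: "0 \<in> S" unfolding S_def
    by (rule CollectI, rule exI[of _ "\<lambda>_. 0"], rule exI[of _ "\<lambda>x v. 0"]) (simp add: C1c_zero)
  have ub: "\<And>y. y \<in> S \<Longrightarrow> y \<le> 2 * (norm a + norm b)"
    unfolding S_def using perimeter_elem_bound[OF d] by blast
  show "perimeter (PG p a b) \<le> 2 * (norm a + norm b)"
    unfolding P using 0 ub by (intro cSup_least) auto
  show "0 \<le> perimeter (PG p a b)"
    unfolding P using 0 ub by (intro cSup_upper) (auto simp: bdd_above_def)
qed

lemma area_PG:
  assumes d: "a$1*b$2 - a$2*b$1 \<noteq> 0"
  shows "area (PG p a b) = \<bar>a$1*b$2 - a$2*b$1\<bar>"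
proof -
  have c: "continuous_on UNIV (\<lambda>x::real^2. 1::real)" by simp
  have "area (PG p a b) = (LINT x:PG p a b|lebesgue. (1::real))"
    using CI(1)[OF d c] by (simp add: area_def set_lebesgue_integral_def)
  also have "\<dots> = \<bar>a$1*b$2 - a$2*b$1\<bar>" using CI(2)[OF d c] by simp
  finally show ?thesis .
qed

lemma width_bound:
  assumes d: "a$1*b$2 - a$2*b$1 \<noteq> 0"
  shows "min_width (PG p a b) \<le> \<bar>a$1*b$2 - a$2*b$1\<bar> / norm a"
proof -
  define dt where "dt = a$1*b$2 - a$2*b$1"
  have an: "norm a \<noteq> 0" using d by auto
  define \<nu> :: "real^2" where "\<nu> = (1 / norm a) *\<^sub>R vector [-a$2, a$1]"
  have nv: "norm (vector [-a$2, a$1] :: real^2) = norm a" by (simp add: norm_2 add.commute)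
  have n1: "norm \<nu> = 1" unfolding \<nu>_def using an nv by (simp del: vector_2)
  define c0 where "c0 = p \<bullet> \<nu>"
  define h where "h = dt / norm a"
  have ip: "(p + s *\<^sub>R a + t *\<^sub>R b) \<bullet> \<nu> = c0 + t * h" for s t
  proof -
    have "a \<bullet> \<nu> = 0" unfolding \<nu>_def by (simp add: inner_2 algebra_simps)
    moreover have "b \<bullet> \<nu> = h" unfolding \<nu>_def h_def dt_def by (simp add: inner_2 algebra_simps diff_divide_distrib)
    ultimately show ?thesis by (simp add: inner_add_left c0_def)
  qed
  define E where "E = {x \<bullet> \<nu> | x. x \<in> PG p a b}"
  have E: "E = {c0 + t * h | t. 0 < t \<and> t < 1}"
  proof (rule set_eqI, rule iffI)
    fix z assume "z \<in> E"
    then obtain s t where "z = (p + s *\<^sub>R a + t *\<^sub>R b) \<bullet> \<nu>" "0<t" "t<1"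
      unfolding E_def PG_def by blast
    then show "z \<in> {c0 + t * h | t. 0 < t \<and> t < 1}" using ip by auto
  next
    fix z assume "z \<in> {c0 + t * h | t. 0 < t \<and> t < 1}"
    then obtain t where zt: "z = c0 + t * h" "0<t" "t<1" by blast
    have "p + (1/2) *\<^sub>R a + t *\<^sub>R b \<in> PG p a b" unfolding PG_def
      using zt by (intro CollectI exI[of _ "1/2"] exI[of _ t]) auto
    then show "z \<in> E" unfolding E_def using ip[of "1/2" t] zt by force
  qed
  have hne: "h \<noteq> 0" using d an by (simp add: h_def dt_def)
  have mE: "measure lebesgue E = \<bar>h\<bar>"
  proof (cases "h > 0")
    case True
    have "E = {c0<..<c0+h}"
    proof safe
      fix z assume "z \<in> E" then show "z \<in> {c0<..<c0+h}" using True by (auto simp: E mult_less_cancel_right2)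
    next
      fix z assume z: "z \<in> {c0<..<c0+h}"
      then show "z \<in> E" unfolding E using True
        by (intro CollectI exI[of _ "(z - c0)/h"]) (auto simp: field_simps)
    qed
    then show ?thesis using True by (simp add: measure_def)
  next
    case False
    then have hn: "h < 0" using hne by simp
    have "E = {c0+h<..<c0}"
    proof safe
      fix z assume "z \<in> E" then show "z \<in> {c0+h<..<c0}" using hn
        by (auto simp: E mult_less_cancel_right2 mult_less_0_iff)
    next
      fix z assume z: "z \<in> {c0+h<..<c0}"
      then show "z \<in> E" unfolding E using hn
        by (intro CollectI exI[of _ "(z - c0)/h"]) (auto simp: field_simps)
    qed
    then show ?thesis using hn by (simp add: measure_def)
  qed
  have "min_width (PG p a b) \<le> measure lebesgue {x \<bullet> \<nu> | x. x \<in> PG p a b}"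
    unfolding min_width_def
    by (rule cINF_lower) (auto simp: n1 bdd_below_def intro!: exI[of _ 0])
  also have "\<dots> = \<bar>h\<bar>" using mE E_def by simp
  finally show ?thesis by (simp add: h_def dt_def)
qed

lemma PG_unique:
  fixes p a b :: "real^2"
  assumes d: "a$1*b$2 - a$2*b$1 \<noteq> 0"
    and e: "p + s *\<^sub>R a + t *\<^sub>R b = p + s' *\<^sub>R a + t' *\<^sub>R b"
  shows "s = s'" "t = t'"
proof -
  from e have e1: "s * a$1 + t * b$1 = s' * a$1 + t' * b$1" and e2: "s * a$2 + t * b$2 = s' * a$2 + t' * b$2"
    by (auto simp: vec_eq_iff forall_2)
  have "(s - s') * (a$1*b$2 - a$2*b$1) = b$2 * ((s-s')*a$1 + (t-t')*b$1) - b$1 * ((s-s')*a$2 + (t-t')*b$2)"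
    by (simp add: algebra_simps)
  also have "\<dots> = 0" using e1 e2 by (simp add: algebra_simps)
  finally show "s = s'" using d by simp
  have "(t - t') * (a$1*b$2 - a$2*b$1) = a$1 * ((s-s')*a$2 + (t-t')*b$2) - a$2 * ((s-s')*a$1 + (t-t')*b$1)"
    by (simp add: algebra_simps)
  also have "\<dots> = 0" using e1 e2 by (simp add: algebra_simps)
  finally show "t = t'" using d by simp
qed

lemma not_in_PG_edges:
  assumes d: "a$1*b$2 - a$2*b$1 \<noteq> 0"
  shows "p + a + t *\<^sub>R b \<notin> PG p a b" "p + t *\<^sub>R b \<notin> PG p a b"
    "p + s *\<^sub>R a + b \<notin> PG p a b" "p + s *\<^sub>R a \<notin> PG p a b"
proof -
  show "p + a + t *\<^sub>R b \<notin> PG p a b"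
  proof
    assume "p + a + t *\<^sub>R b \<in> PG p a b"
    then obtain s' t' where "p + a + t *\<^sub>R b = p + s' *\<^sub>R a + t' *\<^sub>R b" "s' < 1" unfolding PG_def by blast
    then show False using PG_unique(1)[OF d, of p 1 t s' t'] by simp
  qed
  show "p + t *\<^sub>R b \<notin> PG p a b"
  proof
    assume "p + t *\<^sub>R b \<in> PG p a b"
    then obtain s' t' where "p + t *\<^sub>R b = p + s' *\<^sub>R a + t' *\<^sub>R b" "0 < s'" unfolding PG_def by blast
    then show False using PG_unique(1)[OF d, of p 0 t s' t'] by simp
  qed
  show "p + s *\<^sub>R a + b \<notin> PG p a b"
  proof
    assume "p + s *\<^sub>R a + b \<in> PG p a b"
    then obtain s' t' where "p + s *\<^sub>R a + b = p + s' *\<^sub>R a + t' *\<^sub>R b" "t' < 1" unfolding PG_def by blast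
    then show False using PG_unique(2)[OF d, of p s 1 s' t'] by simp
  qed
  show "p + s *\<^sub>R a \<notin> PG p a b"
  proof
    assume "p + s *\<^sub>R a \<in> PG p a b"
    then obtain s' t' where "p + s *\<^sub>R a = p + s' *\<^sub>R a + t' *\<^sub>R b" "0 < t'" unfolding PG_def by blast
    then show False using PG_unique(2)[OF d, of p s 0 s' t'] by simp
  qed
qed

lemma basis_decomp:
  fixes e a b :: "real^2"
  assumes d: "a$1*b$2 - a$2*b$1 \<noteq> 0"
  shows "e = ((e$1*b$2 - e$2*b$1)/(a$1*b$2 - a$2*b$1)) *\<^sub>R a + ((a$1*e$2 - a$2*e$1)/(a$1*b$2 - a$2*b$1)) *\<^sub>R b"
proof -
  define dt where "dt = a$1*b$2 - a$2*b$1"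
  have hd: "dt \<noteq> 0" using d by (simp add: dt_def)
  have "(e$1*b$2 - e$2*b$1) * a$1 + (a$1*e$2 - a$2*e$1) * b$1 = e$1 * dt"
       "(e$1*b$2 - e$2*b$1) * a$2 + (a$1*e$2 - a$2*e$1) * b$2 = e$2 * dt"
    by (simp_all add: dt_def algebra_simps)
  then show ?thesis using hd unfolding dt_def[symmetric]
    by (simp add: vec_eq_iff forall_2 add_divide_distrib[symmetric] divide_simps)
qed

lemma IBP0:
  fixes F :: "real^2 \<Rightarrow> real"
  assumes d: "a$1*b$2 - a$2*b$1 \<noteq> 0"
    and der: "\<And>x. (F has_derivative DF x) (at x)"
    and cont: "\<And>v. continuous_on UNIV (\<lambda>x. DF x v)"
    and van: "\<And>x. x \<notin> PG p a b \<Longrightarrow> F x = 0"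
  shows "(LINT x:PG p a b|lebesgue. DF x e) = 0"
proof -
  define \<alpha> where "\<alpha> = (e$1*b$2 - e$2*b$1)/(a$1*b$2 - a$2*b$1)"
  define \<beta> where "\<beta> = (a$1*e$2 - a$2*e$1)/(a$1*b$2 - a$2*b$1)"
  have lin: "linear (DF x)" for x using has_derivative_linear[OF der] .
  have "DF x e = \<alpha> * DF x a + \<beta> * DF x b" for x
  proof -
    have "DF x e = DF x (\<alpha> *\<^sub>R a + \<beta> *\<^sub>R b)" using basis_decomp[OF d, of e] unfolding \<alpha>_def \<beta>_def by simp
    also have "\<dots> = \<alpha> * DF x a + \<beta> * DF x b"
      by (simp add: linear_add[OF lin] linear_scale[OF lin])
    finally show ?thesis .
  qed
  then have "(LINT x:PG p a b|lebesgue. DF x e) = (LINT x:PG p a b|lebesgue. \<alpha> * DF x a + \<beta> * DF x b)"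
    by simp
  also have "\<dots> = \<alpha> * (LINT x:PG p a b|lebesgue. DF x a) + \<beta> * (LINT x:PG p a b|lebesgue. DF x b)"
    using CI(1)[OF d cont] by (subst set_integral_add(2)) auto
  also have "(LINT x:PG p a b|lebesgue. DF x a) = 0"
    unfolding DIV(2)[OF d der cont] using van not_in_PG_edges[OF d] by simp
  also have "(LINT x:PG p a b|lebesgue. DF x b) = 0"
    unfolding DIV(1)[OF d der cont] using van not_in_PG_edges[OF d] by simp
  finally show ?thesis by simp
qed

lemma PG_sets: assumes d: "a$1*b$2 - a$2*b$1 \<noteq> 0" shows "PG p a b \<in> sets lebesgue"
proof -
  have "set_integrable lebesgue (PG p a b) (\<lambda>x. 1::real)" by (rule CI(1)[OF d]) simp
  then have "integrable lebesgue (indicat_real (PG p a b))" by (simp add: set_integrable_def)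
  then have "indicat_real (PG p a b) \<in> borel_measurable lebesgue" by (rule borel_measurable_integrable)
  then show ?thesis by (simp add: borel_measurable_indicator_iff)
qed

lemma WG:
  fixes u :: "real^2 \<Rightarrow> real" and g :: "real^2 \<Rightarrow> real^2"
  assumes d: "a$1*b$2 - a$2*b$1 \<noteq> 0"
    and der: "\<And>x. (u has_derivative (\<lambda>v. g x \<bullet> v)) (at x)"
    and cg: "continuous_on UNIV g"
  shows "weak_gradient_H1 (PG p a b) u g"
proof -
  have cu: "continuous_on UNIV u"
    using der by (meson continuous_at_imp_continuous_on has_derivative_continuous)
  have iu: "set_integrable lebesgue (PG p a b) u" by (rule CI(1)[OF d cu])
  have iu2: "set_integrable lebesgue (PG p a b) (\<lambda>x. (u x)\<^sup>2)" by (rule CI(1)[OF d]) (auto intro!: continuous_intros cu)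
  have ig2: "set_integrable lebesgue (PG p a b) (\<lambda>x. (norm (g x))\<^sup>2)" by (rule CI(1)[OF d]) (auto intro!: continuous_intros cg)
  have mu: "set_borel_measurable lebesgue (PG p a b) u"
    using iu unfolding set_integrable_def set_borel_measurable_def by (rule borel_measurable_integrable)
  have gm: "g \<in> borel_measurable lebesgue"
    using continuous_imp_measurable_on_sets_lebesgue[OF cg] by simp
  have mg: "set_borel_measurable lebesgue (PG p a b) g"
    unfolding set_borel_measurable_def using gm PG_sets[OF d] by measurable
  have ibp: "(LINT x:PG p a b|lebesgue. u x * D x e) = - (LINT x:PG p a b|lebesgue. (g x \<bullet> e) * \<psi> x)"
    if C: "C1c_on (PG p a b) \<psi> D" for \<psi> D e
  proof -
    have dpsi: "\<And>x. (\<psi> has_derivative D x) (at x)" and cD: "\<And>v. continuous_on UNIV (\<lambda>x. D x v)"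
      and K: "\<exists>K. compact K \<and> K \<subseteq> PG p a b \<and> (\<forall>x. x \<notin> K \<longrightarrow> \<psi> x = 0)"
      using C unfolding C1c_on_def by auto
    have cpsi: "continuous_on UNIV \<psi>"
      using dpsi by (meson continuous_at_imp_continuous_on has_derivative_continuous)
    define F where "F = (\<lambda>x. u x * \<psi> x)"
    define DF where "DF = (\<lambda>x v. (g x \<bullet> v) * \<psi> x + u x * D x v)"
    have dF: "(F has_derivative DF x) (at x)" for x
      unfolding F_def DF_def
      by (rule has_derivative_eq_rhs, rule has_derivative_mult[OF der dpsi]) (auto simp: algebra_simps)
    have cF: "continuous_on UNIV (\<lambda>x. DF x v)" for v
      unfolding DF_def by (auto intro!: continuous_intros cg cpsi cu cD)
    have van: "F x = 0" if "x \<notin> PG p a b" for x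
      using K that unfolding F_def by auto
    have "(LINT x:PG p a b|lebesgue. DF x e) = 0" by (rule IBP0[OF d dF cF van])
    moreover have "(LINT x:PG p a b|lebesgue. DF x e) = (LINT x:PG p a b|lebesgue. (g x \<bullet> e) * \<psi> x) + (LINT x:PG p a b|lebesgue. u x * D x e)"
      unfolding DF_def
      by (rule set_integral_add(2); rule CI(1)[OF d]) (auto intro!: continuous_intros cg cpsi cu cD)
    ultimately show ?thesis by simp
  qed
  show ?thesis unfolding weak_gradient_H1_def using mu iu2 mg ig2 ibp by blast
qed

lemma set_int_sq_nonneg: "0 \<le> (LINT x:A|M. (f x :: real)\<^sup>2)"
  unfolding set_lebesgue_integral_def
  by (rule Bochner_Integration.integral_nonneg) (simp add: indicator_def)

lemma mu1_le:
  assumes "weak_gradient_H1 \<Omega> u g" "(LINT x:\<Omega>|lebesgue. u x) = 0" "(LINT x:\<Omega>|lebesgue. (u x)\<^sup>2) \<noteq> 0"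
  shows "mu1 \<Omega> \<le> (LINT x:\<Omega>|lebesgue. (norm (g x))\<^sup>2) / (LINT x:\<Omega>|lebesgue. (u x)\<^sup>2)"
    "0 \<le> mu1 \<Omega>"
proof -
  define S where "S = {(LINT x:\<Omega>|lebesgue. (norm (g x))\<^sup>2) / (LINT x:\<Omega>|lebesgue. (u x)\<^sup>2) | u g.
      weak_gradient_H1 \<Omega> u g \<and> (LINT x:\<Omega>|lebesgue. u x) = 0 \<and>
      (LINT x:\<Omega>|lebesgue. (u x)\<^sup>2) \<noteq> 0}"
  have M: "mu1 \<Omega> = Inf S" unfolding mu1_def S_def ..
  have inS: "(LINT x:\<Omega>|lebesgue. (norm (g x))\<^sup>2) / (LINT x:\<Omega>|lebesgue. (u x)\<^sup>2) \<in> S"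
    unfolding S_def using assms by blast
  have lb: "\<And>y. y \<in> S \<Longrightarrow> 0 \<le> y"
    unfolding S_def by (auto intro!: divide_nonneg_nonneg set_int_sq_nonneg)
  show "mu1 \<Omega> \<le> (LINT x:\<Omega>|lebesgue. (norm (g x))\<^sup>2) / (LINT x:\<Omega>|lebesgue. (u x)\<^sup>2)"
    unfolding M using inS lb by (intro cInf_lower) (auto simp: bdd_below_def)
  show "0 \<le> mu1 \<Omega>"
    unfolding M using inS lb by (intro cInf_greatest) auto
qed

lemma ftc01:
  fixes F f :: "real \<Rightarrow> real"
  assumes "\<And>t. (F has_real_derivative f t) (at t)"
  shows "(f has_integral (F 1 - F 0)) {0..1}"
proof -
  have "(f has_integral (F 1 - F 0)) {0..1}"
  proof (rule fundamental_theorem_of_calculus)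
    fix x :: real
    show "(F has_vector_derivative f x) (at x within {0..1})"
      using has_field_derivative_at_within[OF assms[of x]]
      unfolding has_real_derivative_iff_has_vector_derivative .
  qed simp
  then show ?thesis .
qed

lemma B1: "((\<lambda>t. cos (pi * t)) has_integral 0) {0..1}"
proof -
  have "((\<lambda>t. cos (pi * t)) has_integral (sin (pi*1)/pi - sin (pi*0)/pi)) {0..1}"
    by (rule ftc01) (auto intro!: derivative_eq_intros)
  then show ?thesis by simp
qed

lemma B4: "((\<lambda>t. sin (pi * t)) has_integral 2/pi) {0..1}"
proof -
  have "((\<lambda>t. sin (pi * t)) has_integral ((- cos (pi*1)/pi) - (- cos (pi*0)/pi))) {0..1}"
    by (rule ftc01) (auto intro!: derivative_eq_intros)
  then show ?thesis by simp
qed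

lemma B2: "((\<lambda>t. (cos (pi * t))\<^sup>2) has_integral 1/2) {0..1}"
proof -
  define F where "F = (\<lambda>t::real. t/2 + sin (2*(pi * t))/(4*pi))"
  have "(F has_real_derivative (cos (pi * t))\<^sup>2) (at t)" for t
  proof -
    have "(F has_real_derivative (1/2 + cos (2*(pi * t))/2)) (at t)"
      unfolding F_def by (auto intro!: derivative_eq_intros simp: field_simps)
    moreover have "1/2 + cos (2*(pi * t))/2 = (cos (pi * t))\<^sup>2"
      using cos_double_cos[of "pi*t"] by (simp add: field_simps)
    ultimately show ?thesis by simp
  qed
  from ftc01[OF this] show ?thesis by (simp add: F_def)
qed

lemma B3: "((\<lambda>t. (sin (pi * t))\<^sup>2) has_integral 1/2) {0..1}"
proof -
  define F where "F = (\<lambda>t::real. t/2 - sin (2*(pi * t))/(4*pi))"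
  have "(F has_real_derivative (sin (pi * t))\<^sup>2) (at t)" for t
  proof -
    have "(F has_real_derivative (1/2 - cos (2*(pi * t))/2)) (at t)"
      unfolding F_def by (auto intro!: derivative_eq_intros simp: field_simps)
    moreover have "1/2 - cos (2*(pi * t))/2 = (sin (pi * t))\<^sup>2"
      using cos_double_sin[of "pi*t"] by (simp add: field_simps)
    ultimately show ?thesis by simp
  qed
  from ftc01[OF this] show ?thesis by (simp add: F_def)
qed

lemma B6: "((\<lambda>t. t - 1/2) has_integral 0) {0..1::real}"
proof -
  have "((\<lambda>t. t - 1/2) has_integral ((1^2/2 - 1/2) - (0^2/2 - 0/2))) {0..1::real}"
    by (rule ftc01[where F="\<lambda>t. t^2/2 - t/2"]) (auto intro!: derivative_eq_intros)
  then show ?thesis by simp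
qed

lemma B7: "((\<lambda>t. (t - 1/2)\<^sup>2) has_integral 1/12) {0..1::real}"
proof -
  have "((\<lambda>t. (t - 1/2)\<^sup>2) has_integral ((1-1/2)^3/3 - (0-1/2)^3/3)) {0..1::real}"
    by (rule ftc01[where F="\<lambda>t. (t-1/2)^3/3"]) (auto intro!: derivative_eq_intros simp: power2_eq_square)
  then show ?thesis by (simp add: power3_eq_cube)
qed

lemma Bc: "((\<lambda>t. k) has_integral k) {0..1::real}"
  using has_integral_const_real[of k 0 1] by simp

lemma B5: "((\<lambda>t. 1::real) has_integral 1) {0..1::real}"
  using has_integral_const_real[of "1::real" 0 1] by simp


lemma HI:
  fixes X :: "real \<Rightarrow> real \<Rightarrow> real"
  assumes "\<And>s. ((\<lambda>t. X s t) has_integral x s) {0..1}" "(x has_integral A) {0..1}"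
  shows "integral {0..1} (\<lambda>s. integral {0..1} (\<lambda>t. X s t)) = A"
proof -
  have "integral {0..1} (\<lambda>s. integral {0..1} (\<lambda>t. X s t)) = integral {0..1} x"
    using assms(1) integral_unique by metis
  then show ?thesis using assms(2) integral_unique by metis
qed

lemma coords:
  fixes p a b :: "real^2"
  assumes d: "a$1*b$2 - a$2*b$1 \<noteq> 0"
  shows "((p + s *\<^sub>R a + t *\<^sub>R b) - p) \<bullet> vector [b$2, -b$1] / (a$1*b$2 - a$2*b$1) = s"
        "((p + s *\<^sub>R a + t *\<^sub>R b) - p) \<bullet> vector [-a$2, a$1] / (a$1*b$2 - a$2*b$1) = t"
proof -
  have "((p + s *\<^sub>R a + t *\<^sub>R b) - p) \<bullet> vector [b$2, -b$1] = s * (a$1*b$2 - a$2*b$1)"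
    by (simp add: inner_2 algebra_simps)
  then show "((p + s *\<^sub>R a + t *\<^sub>R b) - p) \<bullet> vector [b$2, -b$1] / (a$1*b$2 - a$2*b$1) = s" using d by simp
  have "((p + s *\<^sub>R a + t *\<^sub>R b) - p) \<bullet> vector [-a$2, a$1] = t * (a$1*b$2 - a$2*b$1)"
    by (simp add: inner_2 algebra_simps)
  then show "((p + s *\<^sub>R a + t *\<^sub>R b) - p) \<bullet> vector [-a$2, a$1] / (a$1*b$2 - a$2*b$1) = t" using d by simp
qed

lemma test_cos:
  fixes p a b :: "real^2" and \<alpha> \<beta> :: real
  assumes d: "a$1*b$2 - a$2*b$1 \<noteq> 0" and ab: "\<alpha>^2 + \<beta>^2 \<noteq> 0"
  shows "mu1 (PG p a b) \<le> (pi^2 * (\<alpha>^2 * (b$1^2 + b$2^2) + \<beta>^2 * (a$1^2 + a$2^2)) - 16 * \<alpha> * \<beta> * (a$1*b$1 + a$2*b$2))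
                              / ((a$1*b$2 - a$2*b$1)^2 * (\<alpha>^2 + \<beta>^2))"
    "0 \<le> mu1 (PG p a b)"
proof -
  define dt where "dt = a$1*b$2 - a$2*b$1"
  have dt0: "dt \<noteq> 0" using d by (simp add: dt_def)
  define R1 :: "real^2" where "R1 = vector [b$2, -b$1]"
  define R2 :: "real^2" where "R2 = vector [-a$2, a$1]"
  define c1 where "c1 = (\<lambda>x. (x - p) \<bullet> R1 / dt)"
  define c2 where "c2 = (\<lambda>x. (x - p) \<bullet> R2 / dt)"
  have cT: "c1 (p + s *\<^sub>R a + t *\<^sub>R b) = s" "c2 (p + s *\<^sub>R a + t *\<^sub>R b) = t" for s t
    using coords[OF d] unfolding c1_def c2_def R1_def R2_def dt_def by auto
  define u where "u = (\<lambda>x. \<alpha> * cos (pi * c1 x) + \<beta> * cos (pi * c2 x))"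
  define g where "g = (\<lambda>x. (- (pi * \<alpha> * sin (pi * c1 x)) / dt) *\<^sub>R R1 + (- (pi * \<beta> * sin (pi * c2 x)) / dt) *\<^sub>R R2)"
  have dc1: "(c1 has_derivative (\<lambda>v. v \<bullet> R1 / dt)) (at x)" for x
    unfolding c1_def using dt0 by (auto intro!: derivative_eq_intros simp: inner_diff_left)
  have dc2: "(c2 has_derivative (\<lambda>v. v \<bullet> R2 / dt)) (at x)" for x
    unfolding c2_def using dt0 by (auto intro!: derivative_eq_intros simp: inner_diff_left)
  have cc1: "continuous_on UNIV c1" and cc2: "continuous_on UNIV c2"
    unfolding c1_def c2_def using dt0 by (auto intro!: continuous_intros)
  have du: "(u has_derivative (\<lambda>v. g x \<bullet> v)) (at x)" for x
    unfolding u_def g_def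
    by (rule has_derivative_eq_rhs, (rule derivative_eq_intros dc1 dc2 refl)+)
       (auto simp: inner_add_left inner_commute algebra_simps)
  have cg: "continuous_on UNIV g"
    unfolding g_def using dt0 by (auto intro!: continuous_intros cc1 cc2)
  have WGu: "weak_gradient_H1 (PG p a b) u g" by (rule WG[OF d du cg])
  have cu: "continuous_on UNIV u" unfolding u_def using dt0 by (auto intro!: continuous_intros cc1 cc2)
  have uT: "u (p + s *\<^sub>R a + t *\<^sub>R b) = \<alpha> * cos (pi * s) + \<beta> * cos (pi * t)" for s t
    by (simp add: u_def cT)
  define A where "A = a$1^2 + a$2^2"
  define B where "B = b$1^2 + b$2^2"
  define c where "c = a$1*b$1 + a$2*b$2"
  have gT: "(norm (g (p + s *\<^sub>R a + t *\<^sub>R b)))\<^sup>2 =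
      (pi^2/dt^2) * (\<alpha>^2 * B * (sin (pi * s))^2 + \<beta>^2 * A * (sin (pi * t))^2 - 2*\<alpha>*\<beta>*c * (sin (pi * s) * sin (pi * t)))" for s t
    unfolding g_def cT norm_2_sq R1_def R2_def A_def B_def c_def
    using dt0 by (simp add: power2_eq_square field_simps)
  have Iu: "(LINT x:PG p a b|lebesgue. u x) = 0"
  proof -
    have "integral {0..1} (\<lambda>s. integral {0..1} (\<lambda>t. \<alpha> * cos (pi * s) + \<beta> * cos (pi * t))) = 0"
    proof (rule HI)
      show "((\<lambda>t. \<alpha> * cos (pi * s) + \<beta> * cos (pi * t)) has_integral (\<alpha> * cos (pi * s) + \<beta> * 0)) {0..1}" for s
        by (intro has_integral_add has_integral_mult_right B1 Bc)
      show "((\<lambda>s. \<alpha> * cos (pi * s) + \<beta> * 0) has_integral 0) {0..1}"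
        using has_integral_mult_right[OF B1, of \<alpha>] by simp
    qed
    then show ?thesis using CI(2)[OF d cu] by (simp add: uT)
  qed
  have Iu2: "(LINT x:PG p a b|lebesgue. (u x)\<^sup>2) = \<bar>dt\<bar> * ((\<alpha>^2 + \<beta>^2)/2)"
  proof -
    have e: "(\<alpha> * cos (pi * s) + \<beta> * cos (pi * t))\<^sup>2 = \<alpha>^2 * (cos (pi * s))\<^sup>2 + (2 * \<alpha> * \<beta> * cos (pi * s)) * cos (pi * t) + \<beta>^2 * (cos (pi * t))\<^sup>2" for s t
      by (simp add: power2_eq_square algebra_simps)
    have "integral {0..1} (\<lambda>s. integral {0..1} (\<lambda>t. (\<alpha> * cos (pi * s) + \<beta> * cos (pi * t))\<^sup>2)) = (\<alpha>^2 + \<beta>^2)/2"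
      unfolding e
    proof (rule HI)
      show "((\<lambda>t. \<alpha>^2 * (cos (pi * s))\<^sup>2 + (2 * \<alpha> * \<beta> * cos (pi * s)) * cos (pi * t) + \<beta>^2 * (cos (pi * t))\<^sup>2)
          has_integral (\<alpha>^2 * (cos (pi * s))\<^sup>2 + (2 * \<alpha> * \<beta> * cos (pi * s)) * 0 + \<beta>^2 * (1/2))) {0..1}" for s
        by (intro has_integral_add has_integral_mult_right B1 B2 Bc)
      show "((\<lambda>s. \<alpha>^2 * (cos (pi * s))\<^sup>2 + (2 * \<alpha> * \<beta> * cos (pi * s)) * 0 + \<beta>^2 * (1/2)) has_integral (\<alpha>^2 + \<beta>^2)/2) {0..1}"
        using has_integral_add[OF has_integral_mult_right[OF B2, of "\<alpha>^2"] has_integral_mult_right[OF B5, of "\<beta>^2 * (1/2)"]]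
        by (simp add: field_simps)
    qed
    moreover have "continuous_on UNIV (\<lambda>x. (u x)\<^sup>2)" by (auto intro!: continuous_intros cu)
    ultimately show ?thesis using CI(2)[OF d, of "\<lambda>x. (u x)\<^sup>2" p] by (simp add: uT dt_def)
  qed
  have Ig2: "(LINT x:PG p a b|lebesgue. (norm (g x))\<^sup>2) = \<bar>dt\<bar> * ((pi^2/dt^2) * (\<alpha>^2 * B / 2 + \<beta>^2 * A / 2 - 2*\<alpha>*\<beta>*c * ((2/pi) * (2/pi))))"
  proof -
    have "integral {0..1} (\<lambda>s. integral {0..1} (\<lambda>t. (pi^2/dt^2) * (\<alpha>^2 * B * (sin (pi * s))^2 + \<beta>^2 * A * (sin (pi * t))^2 - 2*\<alpha>*\<beta>*c * (sin (pi * s) * sin (pi * t)))))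
        = (pi^2/dt^2) * (\<alpha>^2 * B / 2 + \<beta>^2 * A / 2 - 2*\<alpha>*\<beta>*c * ((2/pi) * (2/pi)))"
    proof (rule HI)
      show "((\<lambda>t. (pi^2/dt^2) * (\<alpha>^2 * B * (sin (pi * s))^2 + \<beta>^2 * A * (sin (pi * t))^2 - 2*\<alpha>*\<beta>*c * (sin (pi * s) * sin (pi * t))))
         has_integral (pi^2/dt^2) * (\<alpha>^2 * B * (sin (pi * s))^2 + \<beta>^2 * A * (1/2) - 2*\<alpha>*\<beta>*c * (sin (pi * s) * (2/pi)))) {0..1}" for s
        by (intro has_integral_add has_integral_diff has_integral_mult_right B3 B4 Bc)
      show "((\<lambda>s. (pi^2/dt^2) * (\<alpha>^2 * B * (sin (pi * s))^2 + \<beta>^2 * A * (1/2) - 2*\<alpha>*\<beta>*c * (sin (pi * s) * (2/pi))))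
         has_integral (pi^2/dt^2) * (\<alpha>^2 * B / 2 + \<beta>^2 * A / 2 - 2*\<alpha>*\<beta>*c * ((2/pi) * (2/pi)))) {0..1}"
      proof -
        have "((\<lambda>s. (pi^2/dt^2) * (\<alpha>^2 * B * ((sin (pi * s))^2) + \<beta>^2 * A * (1/2) * 1 - (2*\<alpha>*\<beta>*c * (2/pi)) * sin (pi * s)))
          has_integral (pi^2/dt^2) * (\<alpha>^2 * B * (1/2) + \<beta>^2 * A * (1/2) * 1 - (2*\<alpha>*\<beta>*c * (2/pi)) * (2/pi))) {0..1}"
          by (intro has_integral_add has_integral_diff has_integral_mult_right B3 B4 B5)
        then show ?thesis by (simp add: algebra_simps)
      qed
    qed
    moreover have "continuous_on UNIV (\<lambda>x. (norm (g x))\<^sup>2)" by (auto intro!: continuous_intros cg)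
    ultimately show ?thesis using CI(2)[OF d, of "\<lambda>x. (norm (g x))\<^sup>2" p] by (simp add: gT dt_def)
  qed
  have pos: "0 < \<alpha>^2 + \<beta>^2" using ab by (metis add_nonneg_nonneg zero_le_power2 less_le)
  have nz: "(LINT x:PG p a b|lebesgue. (u x)\<^sup>2) \<noteq> 0" unfolding Iu2 using dt0 pos ab by auto
  have "mu1 (PG p a b) \<le> (LINT x:PG p a b|lebesgue. (norm (g x))\<^sup>2) / (LINT x:PG p a b|lebesgue. (u x)\<^sup>2)"
    using mu1_le(1)[OF WGu Iu nz] .
  also have "\<dots> = (pi^2 * (\<alpha>^2 * B + \<beta>^2 * A) - 16 * \<alpha> * \<beta> * c) / (dt^2 * (\<alpha>^2 + \<beta>^2))"
  proof -
    define N where "N = pi^2 * (\<alpha>^2 * B + \<beta>^2 * A) - 16 * \<alpha> * \<beta> * c"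
    have e1: "\<bar>dt\<bar> * ((pi^2/dt^2) * (\<alpha>^2 * B / 2 + \<beta>^2 * A / 2 - 2*\<alpha>*\<beta>*c * ((2/pi) * (2/pi))))
       = (\<bar>dt\<bar>/2) * (N / dt^2)"
      unfolding N_def using dt0 by (simp add: field_simps power2_eq_square)
    have e2: "\<bar>dt\<bar> * ((\<alpha>^2 + \<beta>^2)/2) = (\<bar>dt\<bar>/2) * (\<alpha>^2 + \<beta>^2)" by simp
    have "(\<bar>dt\<bar>/2) * (N / dt^2) / ((\<bar>dt\<bar>/2) * (\<alpha>^2 + \<beta>^2)) = (N / dt^2) / (\<alpha>^2 + \<beta>^2)"
      using dt0 by (intro mult_divide_mult_cancel_left) simp
    then show ?thesis unfolding Ig2 Iu2 e1 e2 N_def by simp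
  qed
  finally show "mu1 (PG p a b) \<le> (pi^2 * (\<alpha>^2 * (b$1^2 + b$2^2) + \<beta>^2 * (a$1^2 + a$2^2)) - 16 * \<alpha> * \<beta> * (a$1*b$1 + a$2*b$2))
                              / ((a$1*b$2 - a$2*b$1)^2 * (\<alpha>^2 + \<beta>^2))"
    by (simp add: A_def B_def c_def dt_def)
  show "0 \<le> mu1 (PG p a b)" using mu1_le(2)[OF WGu Iu nz] .
qed

lemma test_lin:
  fixes p a b :: "real^2" and \<gamma> \<delta> :: real
  assumes d: "a$1*b$2 - a$2*b$1 \<noteq> 0" and ab: "\<gamma>^2 + \<delta>^2 \<noteq> 0"
  shows "mu1 (PG p a b) \<le> 12 * (\<gamma>^2 * (b$1^2 + b$2^2) + \<delta>^2 * (a$1^2 + a$2^2) - 2 * \<gamma> * \<delta> * (a$1*b$1 + a$2*b$2))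
                              / ((a$1*b$2 - a$2*b$1)^2 * (\<gamma>^2 + \<delta>^2))"
proof -
  define dt where "dt = a$1*b$2 - a$2*b$1"
  have dt0: "dt \<noteq> 0" using d by (simp add: dt_def)
  define R1 :: "real^2" where "R1 = vector [b$2, -b$1]"
  define R2 :: "real^2" where "R2 = vector [-a$2, a$1]"
  define c1 where "c1 = (\<lambda>x. (x - p) \<bullet> R1 / dt)"
  define c2 where "c2 = (\<lambda>x. (x - p) \<bullet> R2 / dt)"
  have cT: "c1 (p + s *\<^sub>R a + t *\<^sub>R b) = s" "c2 (p + s *\<^sub>R a + t *\<^sub>R b) = t" for s t
    using coords[OF d] unfolding c1_def c2_def R1_def R2_def dt_def by auto
  define u where "u = (\<lambda>x. \<gamma> * (c1 x - 1/2) + \<delta> * (c2 x - 1/2))"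
  define g where "g = (\<lambda>x::real^2. (\<gamma> / dt) *\<^sub>R R1 + (\<delta> / dt) *\<^sub>R R2)"
  have dc1: "(c1 has_derivative (\<lambda>v. v \<bullet> R1 / dt)) (at x)" for x
    unfolding c1_def using dt0 by (auto intro!: derivative_eq_intros simp: inner_diff_left)
  have dc2: "(c2 has_derivative (\<lambda>v. v \<bullet> R2 / dt)) (at x)" for x
    unfolding c2_def using dt0 by (auto intro!: derivative_eq_intros simp: inner_diff_left)
  have cc1: "continuous_on UNIV c1" and cc2: "continuous_on UNIV c2"
    unfolding c1_def c2_def using dt0 by (auto intro!: continuous_intros)
  have du: "(u has_derivative (\<lambda>v. g x \<bullet> v)) (at x)" for x
    unfolding u_def g_def
    by (rule has_derivative_eq_rhs, (rule derivative_eq_intros dc1 dc2 refl)+)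
       (auto simp: inner_add_left inner_commute algebra_simps)
  have cg: "continuous_on UNIV g" unfolding g_def by simp
  have WGu: "weak_gradient_H1 (PG p a b) u g" by (rule WG[OF d du cg])
  have cu: "continuous_on UNIV u" unfolding u_def using dt0 by (auto intro!: continuous_intros cc1 cc2)
  have uT: "u (p + s *\<^sub>R a + t *\<^sub>R b) = \<gamma> * (s - 1/2) + \<delta> * (t - 1/2)" for s t
    by (simp add: u_def cT)
  define A where "A = a$1^2 + a$2^2"
  define B where "B = b$1^2 + b$2^2"
  define c where "c = a$1*b$1 + a$2*b$2"
  have gT: "(norm (g x))\<^sup>2 = (\<gamma>^2 * B + \<delta>^2 * A - 2*\<gamma>*\<delta>*c) / dt^2" for x
    unfolding g_def norm_2_sq R1_def R2_def A_def B_def c_def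
    using dt0 by (simp add: power2_eq_square field_simps)
  have Iu: "(LINT x:PG p a b|lebesgue. u x) = 0"
  proof -
    have "integral {0..1} (\<lambda>s. integral {0..1} (\<lambda>t. \<gamma> * (s - 1/2) + \<delta> * (t - 1/2))) = 0"
    proof (rule HI)
      show "((\<lambda>t. \<gamma> * (s - 1/2) + \<delta> * (t - 1/2)) has_integral (\<gamma> * (s - 1/2) + \<delta> * 0)) {0..1}" for s
        by (intro has_integral_add has_integral_mult_right B6 Bc)
      show "((\<lambda>s. \<gamma> * (s - 1/2) + \<delta> * 0) has_integral 0) {0..1}"
        using has_integral_mult_right[OF B6, of \<gamma>] by simp
    qed
    then show ?thesis using CI(2)[OF d cu] by (simp add: uT)
  qed
  have Iu2: "(LINT x:PG p a b|lebesgue. (u x)\<^sup>2) = \<bar>dt\<bar> * ((\<gamma>^2 + \<delta>^2)/12)"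
  proof -
    have e: "(\<gamma> * (s - 1/2) + \<delta> * (t - 1/2))\<^sup>2 = \<gamma>^2 * (s - 1/2)\<^sup>2 + (2 * \<gamma> * \<delta> * (s - 1/2)) * (t - 1/2) + \<delta>^2 * (t - 1/2)\<^sup>2" for s t :: real
      by (simp add: power2_eq_square algebra_simps)
    have "integral {0..1} (\<lambda>s. integral {0..1} (\<lambda>t. (\<gamma> * (s - 1/2) + \<delta> * (t - 1/2))\<^sup>2)) = (\<gamma>^2 + \<delta>^2)/12"
      unfolding e
    proof (rule HI)
      show "((\<lambda>t. \<gamma>^2 * (s - 1/2)\<^sup>2 + (2 * \<gamma> * \<delta> * (s - 1/2)) * (t - 1/2) + \<delta>^2 * (t - 1/2)\<^sup>2)
          has_integral (\<gamma>^2 * (s - 1/2)\<^sup>2 + (2 * \<gamma> * \<delta> * (s - 1/2)) * 0 + \<delta>^2 * (1/12))) {0..1}" for s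
        by (intro has_integral_add has_integral_mult_right B6 B7 Bc)
      show "((\<lambda>s. \<gamma>^2 * (s - 1/2)\<^sup>2 + (2 * \<gamma> * \<delta> * (s - 1/2)) * 0 + \<delta>^2 * (1/12)) has_integral (\<gamma>^2 + \<delta>^2)/12) {0..1}"
        using has_integral_add[OF has_integral_mult_right[OF B7, of "\<gamma>^2"] has_integral_mult_right[OF B5, of "\<delta>^2 * (1/12)"]]
        by (simp add: field_simps)
    qed
    moreover have "continuous_on UNIV (\<lambda>x. (u x)\<^sup>2)" by (auto intro!: continuous_intros cu)
    ultimately show ?thesis using CI(2)[OF d, of "\<lambda>x. (u x)\<^sup>2" p] by (simp add: uT dt_def)
  qed
  have Ig2: "(LINT x:PG p a b|lebesgue. (norm (g x))\<^sup>2) = \<bar>dt\<bar> * ((\<gamma>^2 * B + \<delta>^2 * A - 2*\<gamma>*\<delta>*c) / dt^2)"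
  proof -
    have "(LINT x:PG p a b|lebesgue. (norm (g x))\<^sup>2) = (LINT x:PG p a b|lebesgue. (\<gamma>^2 * B + \<delta>^2 * A - 2*\<gamma>*\<delta>*c) / dt^2)"
      by (simp add: gT)
    also have "\<dots> = \<bar>dt\<bar> * ((\<gamma>^2 * B + \<delta>^2 * A - 2*\<gamma>*\<delta>*c) / dt^2)"
      using CI(2)[OF d, of "\<lambda>x. (\<gamma>^2 * B + \<delta>^2 * A - 2*\<gamma>*\<delta>*c) / dt^2" p] by (simp add: dt_def)
    finally show ?thesis .
  qed
  have pos: "0 < \<gamma>^2 + \<delta>^2" using ab by (metis add_nonneg_nonneg zero_le_power2 less_le)
  have nz: "(LINT x:PG p a b|lebesgue. (u x)\<^sup>2) \<noteq> 0" unfolding Iu2 using dt0 pos ab by auto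
  have "mu1 (PG p a b) \<le> (LINT x:PG p a b|lebesgue. (norm (g x))\<^sup>2) / (LINT x:PG p a b|lebesgue. (u x)\<^sup>2)"
    using mu1_le(1)[OF WGu Iu nz] .
  also have "\<dots> = 12 * (\<gamma>^2 * B + \<delta>^2 * A - 2*\<gamma>*\<delta>*c) / (dt^2 * (\<gamma>^2 + \<delta>^2))"
  proof -
    define N where "N = \<gamma>^2 * B + \<delta>^2 * A - 2*\<gamma>*\<delta>*c"
    have e2: "\<bar>dt\<bar> * ((\<gamma>^2 + \<delta>^2)/12) = \<bar>dt\<bar> * ((\<gamma>^2 + \<delta>^2)/12)" ..
    have "\<bar>dt\<bar> * (N / dt^2) / (\<bar>dt\<bar> * ((\<gamma>^2 + \<delta>^2)/12)) = (N / dt^2) / ((\<gamma>^2 + \<delta>^2)/12)"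
      using dt0 by (intro mult_divide_mult_cancel_left) simp
    also have "\<dots> = 12 * N / (dt^2 * (\<gamma>^2 + \<delta>^2))" using dt0 pos by (simp add: field_simps)
    finally show ?thesis unfolding Ig2 Iu2 N_def .
  qed
  finally show ?thesis by (simp add: A_def B_def c_def dt_def)
qed

lemma poly_k_aux:
  fixes k Q K0 K :: real
  assumes "1 \<le> K0" "K0 \<le> k" "k \<le> K" "0 < Q" "Q < 9.87"
    and num: "9.87 * K^4 * (K^2 + 4*K + 1) / 8 + 4 * 9.87 * K^2 \<le> 16 * K0 * (1+K0)^2"
  shows "Q * k^4 * (k^2 + 4*k + 1) / 8 + 4 * Q * k^2 \<le> 16 * k * (1+k)^2"
proof -
  have k4: "k^4 \<le> K^4" and k2: "k^2 \<le> K^2" using assms by (intro power_mono; simp)+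
  have a: "Q * k^4 \<le> 9.87 * K^4" using assms k4 by (intro mult_mono) auto
  have b: "k^2 + 4*k + 1 \<le> K^2 + 4*K + 1" using k2 assms by linarith
  have c: "(Q * k^4) * (k^2 + 4*k + 1) \<le> (9.87 * K^4) * (K^2 + 4*K + 1)"
    using a b assms by (intro mult_mono) auto
  have c8: "(Q * k^4) * (k^2 + 4*k + 1) / 8 \<le> (9.87 * K^4) * (K^2 + 4*K + 1) / 8"
    using c by (simp add: divide_right_mono)
  have d: "4 * (Q * k^2) \<le> 4 * (9.87 * K^2)" using assms k2 by (intro mult_left_mono mult_mono) auto
  have e: "16 * K0 * (1+K0)^2 \<le> 16 * k * (1+k)^2" using assms by (intro mult_mono power_mono) auto
  have "Q * k^4 * (k^2 + 4*k + 1) / 8 + 4 * Q * k^2 \<le> 9.87 * K^4 * (K^2 + 4*K + 1) / 8 + 4 * 9.87 * K^2"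
    using add_mono[OF c8 d] by (simp add: mult.assoc)
  also have "\<dots> \<le> 16 * k * (1+k)^2" using num e by linarith
  finally show ?thesis .
qed

lemma poly_k:
  fixes k Q :: real
  assumes "1 \<le> k" "k < 1.24" "0 < Q" "Q < 9.87"
  shows "Q * k^4 * (k^2 + 4*k + 1) / 8 + 4 * Q * k^2 \<le> 16 * k * (1+k)^2"
proof -
  consider "k \<le> 1.1" | "1.1 \<le> k \<and> k \<le> 1.17" | "1.17 \<le> k" by linarith
  then show ?thesis
  proof cases
    case 1 then show ?thesis using assms by (intro poly_k_aux[of 1 k "1.1" Q]) (auto simp: power_divide)
  next
    case 2 then show ?thesis using assms by (intro poly_k_aux[of "1.1" k "1.17" Q]) (auto simp: power_divide)
  next
    case 3 then show ?thesis using assms by (intro poly_k_aux[of "1.17" k "1.24" Q]) (auto simp: power_divide)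
  qed
qed

lemma regionB:
  fixes k g Q :: real
  assumes k1: "1 \<le> k" and g0: "0 \<le> g" and nA: "(3*k+1)*(k-1) < 4*k^2*g^2"
    and nC: "Q*(g^2+k^2) < 3*(1+k)^2" and Q1: "(197/20) < Q" and Q2: "Q < (987/100)"
  shows "(1+k)^2*(Q*(1+k^2) - 16*k*g) \<le> 8*Q*k^2*(1-g^2)"
proof -
  have Qk: "(197/20)*k^2 \<le> Q*k^2" using Q1 by (intro mult_right_mono) auto
  have Qg: "(197/20)*g^2 \<le> Q*g^2" using Q1 by (intro mult_right_mono) auto
  have f1: "0 \<le> (k-1)*((137/20)*k+(17/20))" using k1 by simp
  have ex1: "(k-1)*((137/20)*k+(17/20)) = (137/20)*k^2 - 6*k - (17/20)" by (simp add: field_simps power2_eq_square)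
  have ex2: "3*(1+k)^2 = 3 + 6*k + 3*k^2" by (simp add: algebra_simps power2_eq_square)
  have ex3: "Q*(g^2+k^2) = Q*g^2 + Q*k^2" by (simp add: algebra_simps)
  have g2: "g^2 < 1/4" using Qk Qg f1 ex1 ex2 ex3 nC by linarith
  have gh: "g \<le> 1/2"
  proof (rule ccontr)
    assume "\<not> g \<le> 1/2"
    then have "(1/2)^2 \<le> g^2" by (intro power_mono) auto
    then show False using g2 by (simp add: power_divide)
  qed
  have kb: "k < (31/25)"
  proof (rule ccontr)
    assume "\<not> k < (31/25)"
    then have "0 \<le> (k - (31/25))*((137/20)*k+(1247/500))" by simp
    moreover have "(k - (31/25))*((137/20)*k+(1247/500)) = (137/20)*k^2 - 6*k - (38657/12500)" by (simp add: field_simps power2_eq_square)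
    moreover have "0 \<le> Q*g^2" using Q1 by simp
    ultimately show False using Qk ex2 ex3 nC by linarith
  qed
  define e where "e = k - 1"
  have e0: "0 \<le> e" using k1 by (simp add: e_def)
  have "4*e \<le> (3*k+1)*e" using e0 k1 by (intro mult_right_mono) auto
  moreover have "(3*k+1)*e < 4*(k^2*g^2)" using nA by (simp add: e_def mult.assoc)
  ultimately have "4*e < 4*(k^2*g^2)" by (rule order_le_less_trans)
  then have ek: "e \<le> k^2*g^2" by simp
  have e2: "e^2 \<le> (k^2*g^2)^2" using e0 ek by (intro power_mono) auto
  have g3: "g^3 \<le> (1/2)^3" using g0 gh by (intro power_mono) auto
  have g4: "g^4 \<le> g/8"
  proof -
    have "g^4 = g * g^3" by (simp add: power_numeral_reduce)
    also have "\<dots> \<le> g * (1/2)^3" using g3 g0 by (intro mult_left_mono) auto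
    finally show ?thesis by (simp add: power_divide)
  qed
  have e2': "e^2 \<le> k^4 * (g/8)"
  proof -
    have "(k^2*g^2)^2 = k^4 * g^4" by (simp add: power_mult_distrib power_mult[symmetric])
    also have "\<dots> \<le> k^4 * (g/8)" using g4 by (intro mult_left_mono) auto
    finally show ?thesis using e2 by linarith
  qed
  have T1: "Q * e^2 * (k^2+4*k+1) \<le> Q * (k^4 * (g/8)) * (k^2+4*k+1)"
    using e2' Q1 k1 by (intro mult_right_mono mult_left_mono) auto
  have gg: "g^2 \<le> g/2"
  proof -
    have "g^2 = g * g" by (simp add: power2_eq_square)
    also have "\<dots> \<le> g * (1/2)" using gh g0 by (intro mult_left_mono) auto
    finally show ?thesis by simp
  qed
  have T2: "8*Q*k^2*g^2 \<le> 8*Q*k^2*(g/2)"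
    using gg Q1 by (intro mult_left_mono) auto
  have P: "(Q * k^4 * (k^2 + 4*k + 1) / 8 + 4 * Q * k^2) * g \<le> (16 * k * (1+k)^2) * g"
  proof -
    have "Q * k^4 * (k^2 + 4*k + 1) / 8 + 4 * Q * k^2 \<le> 16 * k * (1+k)^2"
      by (rule poly_k) (use k1 kb Q1 Q2 in auto)
    then show ?thesis using g0 by (intro mult_right_mono) auto
  qed
  have id: "8*Q*k^2*(1-g^2) - (1+k)^2*(Q*(1+k^2) - 16*k*g)
      = 16*k*(1+k)^2*g - Q * e^2 * (k^2+4*k+1) - 8*Q*k^2*g^2"
    unfolding e_def by (simp add: algebra_simps power2_eq_square power_numeral_reduce)
  have id2: "Q * (k^4 * (g/8)) * (k^2+4*k+1) + 8*Q*k^2*(g/2) = (Q * k^4 * (k^2 + 4*k + 1) / 8 + 4 * Q * k^2) * g"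
    by (simp add: algebra_simps)
  show ?thesis using id id2 T1 T2 P by linarith
qed

lemma pi2_bounds: "197/20 < pi^2" "pi^2 < 987/100"
proof -
  have a: "3.14 < pi" "pi < 3.1416" using pi_approx by auto
  have "3.14^2 < pi^2" using a by (intro power_strict_mono) auto
  then show "197/20 < pi^2" by (simp add: power_divide)
  have "pi^2 < 3.1416^2" using a by (intro power_strict_mono) auto
  then show "pi^2 < 987/100" by (simp add: power_divide)
qed

lemma final_real:
  fixes x y c mu :: real
  assumes x: "0 < x" and xy: "x \<le> y" and D: "c^2 < x^2*y^2" and mu0: "0 \<le> mu"
    and h1: "mu * (x^2*y^2 - c^2) \<le> pi^2 * x^2"
    and h2: "2 * mu * (x^2*y^2 - c^2) \<le> pi^2 * (x^2 + y^2) - 16 * \<bar>c\<bar>"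
    and h3: "mu * (c^2 + y^4) \<le> 12 * y^2"
  shows "(x+y)^2 * mu \<le> 4 * pi^2"
proof -
  define D where "D = x^2*y^2 - c^2"
  have Dp: "0 < D" using D by (simp add: D_def)
  have y: "0 < y" using x xy by simp
  consider (A) "x^2*(x+y)^2 \<le> 4*D" | (C) "3*y^2*(x+y)^2 \<le> pi^2*(c^2+y^4)"
    | (B) "4*D < x^2*(x+y)^2" "pi^2*(c^2+y^4) < 3*y^2*(x+y)^2" by linarith
  then show ?thesis
  proof cases
    case A
    have "(x+y)^2 * mu * D \<le> (x+y)^2 * (pi^2 * x^2)"
      using h1 by (simp add: D_def mult.assoc mult_left_mono)
    also have "\<dots> = pi^2 * (x^2*(x+y)^2)" by (simp add: algebra_simps)
    also have "\<dots> \<le> pi^2 * (4*D)" using A by (intro mult_left_mono) auto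
    finally have "((x+y)^2 * mu) * D \<le> (4*pi^2) * D" by (simp add: algebra_simps)
    then show ?thesis using Dp by simp
  next
    case C
    have cy: "0 < c^2 + y^4" using y by (simp add: add_nonneg_pos)
    have "(x+y)^2 * mu * (c^2 + y^4) \<le> (x+y)^2 * (12 * y^2)"
      using h3 by (simp add: mult.assoc mult_left_mono)
    also have "\<dots> = 4 * (3*y^2*(x+y)^2)" by (simp add: algebra_simps)
    also have "\<dots> \<le> 4 * (pi^2*(c^2+y^4))" using C by simp
    finally have "((x+y)^2 * mu) * (c^2+y^4) \<le> (4*pi^2) * (c^2+y^4)" by (simp add: algebra_simps)
    then show ?thesis using cy by simp
  next
    case B
    define k where "k = y / x"
    define g where "g = \<bar>c\<bar> / (x*y)"
    have yk: "y = k * x" using x by (simp add: k_def)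
    have cg: "\<bar>c\<bar> = g * k * x^2" using x y by (simp add: g_def k_def power2_eq_square)
    have c2: "c^2 = g^2 * k^2 * x^4"
    proof -
      have "c^2 = \<bar>c\<bar>^2" by simp
      also have "\<dots> = g^2 * k^2 * x^4" unfolding cg by (simp add: power_mult_distrib power_mult[symmetric])
      finally show ?thesis .
    qed
    have k1: "1 \<le> k" using x xy by (simp add: k_def)
    have g0: "0 \<le> g" using x y by (simp add: g_def)
    have x4: "0 < x^4" using x by simp
    have nA: "(3*k+1)*(k-1) < 4*k^2*g^2"
    proof -
      have "4*D = x^4 * (4*k^2 - 4*k^2*g^2)" unfolding D_def c2 yk by (simp add: algebra_simps power2_eq_square power4_eq_xxxx)
      moreover have "x^2*(x+y)^2 = x^4 * (1+k)^2" unfolding yk by (simp add: algebra_simps power2_eq_square power4_eq_xxxx)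
      ultimately have "x^4 * (4*k^2 - 4*k^2*g^2) < x^4 * (1+k)^2" using B(1) by simp
      then have "4*k^2 - 4*k^2*g^2 < (1+k)^2" using x4 by simp
      then show ?thesis by (simp add: algebra_simps power2_eq_square)
    qed
    have nC: "pi^2*(g^2+k^2) < 3*(1+k)^2"
    proof -
      have "pi^2*(c^2+y^4) = (x^4*k^2) * (pi^2*(g^2+k^2))" unfolding c2 yk by (simp add: algebra_simps power2_eq_square power4_eq_xxxx)
      moreover have "3*y^2*(x+y)^2 = (x^4*k^2) * (3*(1+k)^2)" unfolding yk by (simp add: algebra_simps power2_eq_square power4_eq_xxxx)
      moreover have "0 < x^4*k^2" using x4 k1 by simp
      ultimately show ?thesis using B(2) by (metis mult_less_cancel_left_pos)
    qed
    have R: "(1+k)^2*(pi^2*(1+k^2) - 16*k*g) \<le> 8*pi^2*k^2*(1-g^2)"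
      by (rule regionB[OF k1 g0 nA nC pi2_bounds])
    have "(x+y)^2*(pi^2*(x^2+y^2) - 16*\<bar>c\<bar>) = x^4 * ((1+k)^2*(pi^2*(1+k^2) - 16*k*g))"
      unfolding cg yk by (simp add: algebra_simps power2_eq_square power4_eq_xxxx)
    also have "\<dots> \<le> x^4 * (8*pi^2*k^2*(1-g^2))" using R x4 by (intro mult_left_mono) auto
    also have "\<dots> = 8*pi^2*D" unfolding D_def c2 yk by (simp add: algebra_simps power2_eq_square power4_eq_xxxx)
    finally have B2: "(x+y)^2*(pi^2*(x^2+y^2) - 16*\<bar>c\<bar>) \<le> 8*pi^2*D" .
    have "(x+y)^2 * (2 * mu * D) \<le> (x+y)^2*(pi^2*(x^2+y^2) - 16*\<bar>c\<bar>)"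
      using h2 by (simp add: D_def mult_left_mono)
    also have "\<dots> \<le> 8*pi^2*D" by (rule B2)
    finally have "((x+y)^2 * mu) * (2*D) \<le> (4*pi^2) * (2*D)" by (simp add: algebra_simps)
    then show ?thesis using Dp by (simp add: mult.commute)
  qed
qed


lemma PG_swap: "PG p a b = PG p b a"
  unfolding PG_def by (auto simp: add_ac) (metis add.assoc add.commute)+

lemma core:
  fixes p a b :: "real^2"
  assumes d: "a$1*b$2 - a$2*b$1 \<noteq> 0" and le: "norm a \<le> norm b"
  shows "perimeter (PG p a b) * min_width (PG p a b) \<le> 4 * area (PG p a b) \<and>
         (perimeter (PG p a b))\<^sup>2 * mu1 (PG p a b) \<le> 16 * pi\<^sup>2"
proof -
  define dt where "dt = a$1*b$2 - a$2*b$1"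
  define A where "A = a$1^2 + a$2^2"
  define B where "B = b$1^2 + b$2^2"
  define c where "c = a$1*b$1 + a$2*b$2"
  define x where "x = norm a"
  define y where "y = norm b"
  define P where "P = perimeter (PG p a b)"
  define M where "M = mu1 (PG p a b)"
  have dt0: "dt \<noteq> 0" using d by (simp add: dt_def)
  have xA: "x^2 = A" unfolding x_def A_def by (simp add: norm_2_sq)
  have yB: "y^2 = B" unfolding y_def B_def by (simp add: norm_2_sq)
  have lag: "dt^2 = A*B - c^2" unfolding dt_def A_def B_def c_def by (simp add: algebra_simps power2_eq_square)
  have dtp: "0 < dt^2" using dt0 by simp
  have x0: "0 < x" using d unfolding x_def by auto
  have xy: "x \<le> y" using le by (simp add: x_def y_def)
  have P0: "0 \<le> P" and P1: "P \<le> 2*(x+y)" using perimeter_bounds[OF d, of p] by (auto simp: P_def x_def y_def)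
  have d': "b$1*a$2 - b$2*a$1 \<noteq> 0" using d by (simp add: algebra_simps)
  have W: "min_width (PG p a b) \<le> \<bar>dt\<bar> / y"
    using width_bound[OF d', of p] PG_swap[of p a b] unfolding dt_def y_def by (simp add: abs_minus_commute algebra_simps)
  have Ar: "area (PG p a b) = \<bar>dt\<bar>" using area_PG[OF d] by (simp add: dt_def)
  have part1: "P * min_width (PG p a b) \<le> 4 * area (PG p a b)"
  proof -
    have y0: "0 < y" using x0 xy by simp
    have "P * min_width (PG p a b) \<le> P * (\<bar>dt\<bar> / y)" using W P0 by (intro mult_left_mono) auto
    also have "\<dots> \<le> 2*(x+y) * (\<bar>dt\<bar> / y)" using P1 y0 by (intro mult_right_mono) auto
    also have "\<dots> = 2*(x+y)/y * \<bar>dt\<bar>" by simp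
    also have "\<dots> \<le> 4 * \<bar>dt\<bar>"
    proof -
      have "2*(x+y)/y \<le> 4" using y0 xy by (simp add: divide_le_eq)
      then show ?thesis by (intro mult_right_mono) auto
    qed
    finally show ?thesis using Ar by simp
  qed
  have M0: "0 \<le> M" using test_cos(2)[OF d, of 0 1 p] by (simp add: M_def)
  have h1: "M * (x^2*y^2 - c^2) \<le> pi^2 * x^2"
  proof -
    have "M \<le> (pi^2 * A) / dt^2" using test_cos(1)[OF d, of 0 1 p] by (simp add: M_def A_def dt_def)
    then have "M * dt^2 \<le> pi^2 * A" using dtp by (simp add: pos_le_divide_eq)
    then show ?thesis using lag xA yB by simp
  qed
  have h2: "2 * M * (x^2*y^2 - c^2) \<le> pi^2 * (x^2 + y^2) - 16 * \<bar>c\<bar>"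
  proof -
    define \<sigma> :: real where "\<sigma> = (if 0 \<le> c then 1 else -1)"
    have s2: "\<sigma>^2 = 1" by (simp add: \<sigma>_def)
    have sc: "\<sigma> * c = \<bar>c\<bar>" by (simp add: \<sigma>_def)
    have "M \<le> (pi^2 * (1^2 * B + \<sigma>^2 * A) - 16 * 1 * \<sigma> * c) / (dt^2 * (1^2 + \<sigma>^2))"
      using test_cos(1)[OF d, of 1 \<sigma> p] s2 by (simp add: M_def A_def B_def c_def dt_def)
    then have "M \<le> (pi^2 * (B + A) - 16 * \<bar>c\<bar>) / (dt^2 * 2)" using s2 sc by (simp add: mult.assoc)
    then have "M * (dt^2 * 2) \<le> pi^2 * (B + A) - 16 * \<bar>c\<bar>" using dtp by (simp add: pos_le_divide_eq)
    then show ?thesis using lag xA yB by (simp add: algebra_simps)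
  qed
  have h3: "M * (c^2 + y^4) \<le> 12 * y^2"
  proof -
    have B0: "0 < B" using xy x0 yB by (metis less_le_trans zero_less_power)
    have cb: "c^2 + B^2 \<noteq> 0" using B0 by (metis add_nonneg_pos zero_le_power2 zero_less_power less_irrefl)
    have "M \<le> 12 * (c^2 * B + B^2 * A - 2 * c * B * c) / (dt^2 * (c^2 + B^2))"
      using test_lin[OF d cb[folded B_def], of p] by (simp add: M_def A_def B_def c_def dt_def)
    also have "12 * (c^2 * B + B^2 * A - 2 * c * B * c) = 12 * B * dt^2" unfolding lag by (simp add: algebra_simps power2_eq_square)
    finally have "M \<le> 12 * B * dt^2 / (dt^2 * (c^2 + B^2))" .
    also have "\<dots> = 12 * B / (c^2 + B^2)" using dt0 by simp
    finally have "M * (c^2 + B^2) \<le> 12 * B"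
      using B0 by (simp add: pos_le_divide_eq add_nonneg_pos)
    moreover have "y^4 = B^2" using yB by (metis power2_eq_square power4_eq_xxxx mult.assoc)
    ultimately show ?thesis using yB by simp
  qed
  have D: "c^2 < x^2*y^2" using lag dtp xA yB by simp
  have F: "(x+y)^2 * M \<le> 4 * pi^2" by (rule final_real[OF x0 xy D M0 h1 h2 h3])
  have "P^2 * M \<le> (2*(x+y))^2 * M" using P0 P1 M0 by (intro mult_right_mono power_mono) auto
  also have "\<dots> = 4 * ((x+y)^2 * M)" by (simp add: power2_eq_square algebra_simps)
  also have "\<dots> \<le> 16 * pi^2" using F by (simp add: mult.commute)
  finally show ?thesis using part1 by (simp add: P_def M_def)
qed

theorem mainTheorem9:
  fixes \<Omega> :: "(real^2) set"
  assumes "is_parallelogram \<Omega>"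
  shows "perimeter \<Omega> * min_width \<Omega> \<le> 4 * area \<Omega> \<and>
         (perimeter \<Omega>)\<^sup>2 * mu1 \<Omega> \<le> 16 * pi\<^sup>2"
proof -
  obtain p a b where d: "a$1 * b$2 - a$2 * b$1 \<noteq> 0" and O: "\<Omega> = PG p a b"
    using assms unfolding is_parallelogram_def PG_def by blast
  show ?thesis
  proof (cases "norm a \<le> norm b")
    case True then show ?thesis using core[OF d True] O by simp
  next
    case False
    have d': "b$1*a$2 - b$2*a$1 \<noteq> 0" using d by (simp add: algebra_simps)
    have "norm b \<le> norm a" using False by simp
    then show ?thesis using core[OF d', of p] O PG_swap[of p a b] by simp
  qed
qed

end
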